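(* Let $d$ be a compatible metric on the Cantor space $\mathbf{C}$ and let $h:\mathbf{C}\to\mathbf{C}$ be a homeomorphism which is an isometry such that the orbit $\mathrm{orb}(x,h)$ is nowhere dense in $\mathbf{C}$ for every $x\in\mathbf{C}$. Then there exist $\Phi=(\varphi^L,\varphi^U)$ such that $\mathbf{F}_\Phi$ is a Fraïssé fence and a homeomorphism $\hat h$ of $\mathbf{F}_\Phi$ which is an isometry such that $h$ is a factor of $\hat h$. Moreover, if $\{K_n\}$ is a sequence of closed, $h$-invariant, nowhere dense subsets of $\mathbf{C}$, then $\Phi$ can be chosen so that $\varphi^L=\varphi^U$ on $\bigcup_n K_n$.
   Context: For $\Phi=(\varphi^L,\varphi^U)$ with $\varphi^L,\varphi^U:\mathbf{C}\to[0,1]$, $\varphi^L$ lower semicontinuous, $\varphi^U$ upper semicontinuous, $\varphi^L\le\varphi^U$, the fence is $\mathbf{F}_\Phi=\{(x,t)\in\mathbf{C}\times[0,1]:\varphi^L(x)\le t\le\varphi^U(x)\}$ with the maximum metric of $\mathbf{C}\times[0,1]$, and $\mathbf{F}_\Phi(x)=\{t:(x,t)\in\mathbf{F}_\Phi\}$. $\mathbf{F}_\Phi$ is a Fraïssé fence if for every $x\in\mathbf{C}$ and every continuum $I\subseteq\mathbf{F}_\Phi(x)$ there is a sequence $x_k\in\mathbf{C}\setminus\{x\}$ converging to $x$ such that each $\mathbf{F}_\Phi(x_k)$ is a nondegenerate arc and $\mathbf{F}_\Phi(x_k)\to I$ in the Hausdorff metric. *)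

theory Defs
  imports "HOL-Analysis.Analysis"
begin

type_synonym cantor = "nat \<Rightarrow> bool"

definition cantor_top :: "cantor topology" where
  "cantor_top = product_topology (\<lambda>_. discrete_topology (UNIV :: bool set)) UNIV"

definition compatible_metric :: "(cantor \<Rightarrow> cantor \<Rightarrow> real) \<Rightarrow> bool" where
  "compatible_metric d \<longleftrightarrow> Metric_space UNIV d \<and> Metric_space.mtopology UNIV d = cantor_top"

definition nowhere_dense_in :: "'a topology \<Rightarrow> 'a set \<Rightarrow> bool" where
  "nowhere_dense_in X S \<longleftrightarrow> X interior_of (X closure_of S) = {}"

definition orb :: "'a \<Rightarrow> ('a \<Rightarrow> 'a) \<Rightarrow> 'a set" where
  "orb x h = {(h ^^ n) x | n. True}"

definition lsc_on :: "'a topology \<Rightarrow> ('a \<Rightarrow> real) \<Rightarrow> bool" where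
  "lsc_on X f \<longleftrightarrow> (\<forall>a. openin X {x \<in> topspace X. a < f x})"

definition usc_on :: "'a topology \<Rightarrow> ('a \<Rightarrow> real) \<Rightarrow> bool" where
  "usc_on X f \<longleftrightarrow> (\<forall>a. openin X {x \<in> topspace X. f x < a})"

definition admissible :: "(cantor \<Rightarrow> real) \<Rightarrow> (cantor \<Rightarrow> real) \<Rightarrow> bool" where
  "admissible phiL phiU \<longleftrightarrow>
     (\<forall>x. 0 \<le> phiL x \<and> phiL x \<le> 1 \<and> 0 \<le> phiU x \<and> phiU x \<le> 1) \<and>
     lsc_on cantor_top phiL \<and> usc_on cantor_top phiU \<and> (\<forall>x. phiL x \<le> phiU x)"

definition fence :: "(cantor \<Rightarrow> real) \<Rightarrow> (cantor \<Rightarrow> real) \<Rightarrow> (cantor \<times> real) set" where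
  "fence phiL phiU = {(x, t). t \<in> {0..1} \<and> phiL x \<le> t \<and> t \<le> phiU x}"

definition fence_fiber :: "(cantor \<Rightarrow> real) \<Rightarrow> (cantor \<Rightarrow> real) \<Rightarrow> cantor \<Rightarrow> real set" where
  "fence_fiber phiL phiU x = {t. (x, t) \<in> fence phiL phiU}"

definition max_dist :: "(cantor \<Rightarrow> cantor \<Rightarrow> real) \<Rightarrow> cantor \<times> real \<Rightarrow> cantor \<times> real \<Rightarrow> real" where
  "max_dist d p q = max (d (fst p) (fst q)) \<bar>snd p - snd q\<bar>"

definition fence_top :: "(cantor \<Rightarrow> cantor \<Rightarrow> real) \<Rightarrow> (cantor \<Rightarrow> real) \<Rightarrow> (cantor \<Rightarrow> real)
    \<Rightarrow> (cantor \<times> real) topology" where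
  "fence_top d phiL phiU = Metric_space.mtopology (fence phiL phiU) (max_dist d)"

text \<open>Hausdorff distance between (nonempty bounded) sets of reals.\<close>
definition hausdist :: "real set \<Rightarrow> real set \<Rightarrow> real" where
  "hausdist A B = max (SUP a\<in>A. infdist a B) (SUP b\<in>B. infdist b A)"

definition continuum :: "real set \<Rightarrow> bool" where
  "continuum S \<longleftrightarrow> S \<noteq> {} \<and> compact S \<and> connected S"

definition nondegenerate_arc :: "real set \<Rightarrow> bool" where
  "nondegenerate_arc S \<longleftrightarrow> (\<exists>g. arc g \<and> path_image g = S)"

definition fraisse_fence :: "(cantor \<Rightarrow> real) \<Rightarrow> (cantor \<Rightarrow> real) \<Rightarrow> bool" where
  "fraisse_fence phiL phiU \<longleftrightarrow>
    (\<forall>x I. continuum I \<and> I \<subseteq> fence_fiber phiL phiU x \<longrightarrow>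
       (\<exists>xs :: nat \<Rightarrow> cantor. (\<forall>k. xs k \<noteq> x) \<and> limitin cantor_top xs x sequentially \<and>
          (\<forall>k. nondegenerate_arc (fence_fiber phiL phiU (xs k))) \<and>
          (\<lambda>k. hausdist (fence_fiber phiL phiU (xs k)) I) \<longlonglongrightarrow> 0))"

definition is_factor :: "(cantor \<times> real) topology \<Rightarrow> ((cantor \<times> real) \<Rightarrow> (cantor \<times> real))
    \<Rightarrow> (cantor \<Rightarrow> cantor) \<Rightarrow> bool" where
  "is_factor F hh h \<longleftrightarrow> (\<exists>pi. continuous_map F cantor_top pi \<and> pi ` topspace F = UNIV \<and>
      (\<forall>p \<in> topspace F. pi (hh p) = h (pi p)))"

end

theory Submission
  imports Defs
begin

lemma topspace_cantor[simp]: "topspace cantor_top = UNIV"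
  unfolding cantor_top_def by simp

lemma compact_cantor: "compact_space cantor_top"
  unfolding cantor_top_def
  by (simp add: compact_space_product_topology compact_space_discrete_topology)

definition agree :: "nat \<Rightarrow> cantor \<Rightarrow> cantor \<Rightarrow> bool" where
  "agree n x y \<longleftrightarrow> (\<forall>i<n. x i = y i)"

lemma agree_refl[simp]: "agree n x x" by (simp add: agree_def)
lemma agree_sym: "agree n x y \<Longrightarrow> agree n y x" by (simp add: agree_def)
lemma agree_trans: "agree n x y \<Longrightarrow> agree n y z \<Longrightarrow> agree n x z" by (simp add: agree_def)
lemma agree_mono: "agree n x y \<Longrightarrow> m \<le> n \<Longrightarrow> agree m x y" by (simp add: agree_def)

lemma openin_agree: "openin cantor_top {y. agree n x y}"
  unfolding cantor_top_def openin_product_topology_alt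
proof (intro ballI)
  fix y assume y: "y \<in> {y. agree n x y}"
  define U where "U = (\<lambda>i. if i < n then {x i} else (UNIV::bool set))"
  have "{i \<in> UNIV. U i \<noteq> topspace (discrete_topology UNIV)} \<subseteq> {..<n}"
    by (auto simp: U_def)
  hence "finite {i \<in> UNIV. U i \<noteq> topspace (discrete_topology UNIV)}"
    using finite_subset by blast
  moreover have "\<forall>i\<in>UNIV. openin (discrete_topology UNIV) (U i)" by simp
  moreover have "y \<in> Pi\<^sub>E UNIV U" using y by (auto simp: U_def agree_def)
  moreover have "Pi\<^sub>E UNIV U \<subseteq> {y. agree n x y}" by (auto simp: U_def agree_def PiE_def Pi_def)
  ultimately show "\<exists>U. finite {i \<in> UNIV. U i \<noteq> topspace (discrete_topology UNIV)} \<and>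
             (\<forall>i\<in>UNIV. openin (discrete_topology UNIV) (U i)) \<and> y \<in> Pi\<^sub>E UNIV U \<and> Pi\<^sub>E UNIV U \<subseteq> {y. agree n x y}"
    by blast
qed

lemma open_basis_agree:
  assumes "openin cantor_top U" "x \<in> U"
  shows "\<exists>n. {y. agree n x y} \<subseteq> U"
proof -
  obtain V where V: "finite {i \<in> UNIV. V i \<noteq> topspace (discrete_topology (UNIV::bool set))}"
    "\<forall>i\<in>UNIV. openin (discrete_topology UNIV) (V i)" "x \<in> Pi\<^sub>E UNIV V" "Pi\<^sub>E UNIV V \<subseteq> U"
    using assms unfolding cantor_top_def openin_product_topology_alt by blast
  have "finite {i. V i \<noteq> UNIV}" using V(1) by simp
  then obtain n where n0: "{i. V i \<noteq> UNIV} \<subseteq> {..<n}"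
    using finite_nat_bounded by blast
  hence n: "\<forall>i\<in>{i. V i \<noteq> UNIV}. i < n" by auto
  have "{y. agree n x y} \<subseteq> Pi\<^sub>E UNIV V"
  proof
    fix y assume "y \<in> {y. agree n x y}"
    hence ag: "\<forall>i<n. x i = y i" by (simp add: agree_def)
    have xv: "\<And>i. x i \<in> V i" using V(3) by (auto simp: PiE_def Pi_def)
    have "\<And>i. y i \<in> V i"
    proof -
      fix i show "y i \<in> V i"
      proof (cases "V i = UNIV")
        case False then have "i < n" using n by auto
        then have "y i = x i" using ag by simp
        then show ?thesis using xv[of i] by simp
      qed simp
    qed
    thus "y \<in> Pi\<^sub>E UNIV V" by (simp add: PiE_def)
  qed
  thus ?thesis using V(4) by blast
qed

locale S64 = Metric_space "UNIV::cantor set" d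
  for d :: "cantor \<Rightarrow> cantor \<Rightarrow> real" +
  fixes h :: "cantor \<Rightarrow> cantor" and K :: "nat \<Rightarrow> cantor set"
  assumes mtop: "mtopology = cantor_top"
    and hom: "homeomorphic_map cantor_top cantor_top h"
    and iso: "\<And>x y. d (h x) (h y) = d x y"
    and orbnd: "\<And>x. nowhere_dense_in cantor_top (orb x h)"
    and Kcl: "\<And>n. closedin cantor_top (K n)" and Kinv: "\<And>n. h ` K n \<subseteq> K n"
    and Knd: "\<And>n. nowhere_dense_in cantor_top (K n)"
begin

lemma open_ball_ex: "openin cantor_top U \<Longrightarrow> x \<in> U \<Longrightarrow> \<exists>r>0. \<forall>y. d x y < r \<longrightarrow> y \<in> U"
  unfolding mtop[symmetric] openin_mtopology by (auto simp: subset_iff)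

lemma ball_open: "openin cantor_top {y. d x y < r}"
proof -
  have "{y. d x y < r} = mball x r" by auto
  thus ?thesis using openin_mball mtop by metis
qed

lemma compact_m: "compactin mtopology UNIV"
  using compact_cantor mtop by (simp add: compact_space_def)

lemma fine: assumes "e > 0" shows "\<exists>N. \<forall>x y. agree N x y \<longrightarrow> d x y < e"
proof -
  have "\<forall>x. \<exists>n. {y. agree n x y} \<subseteq> {y. d x y < e/2}"
  proof
    fix x show "\<exists>n. {y. agree n x y} \<subseteq> {y. d x y < e/2}"
      using open_basis_agree[OF ball_open[of x "e/2"]] assms by simp
  qed
  then obtain nx where nx: "\<And>x. {y. agree (nx x) x y} \<subseteq> {y. d x y < e/2}" by metis
  define C where "C = (\<lambda>x. {y. agree (nx x) x y}) ` UNIV"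
  have c1: "\<forall>U\<in>C. openin cantor_top U" by (auto simp: C_def openin_agree)
  have c2: "UNIV \<subseteq> \<Union>C"
  proof
    fix x :: cantor show "x \<in> \<Union>C" unfolding C_def by (rule UnionI[of "{y. agree (nx x) x y}"]) auto
  qed
  have "\<exists>F. finite F \<and> F \<subseteq> C \<and> UNIV \<subseteq> \<Union>F"
    using compact_cantor c1 c2 unfolding compact_space_def compactin_def by simp
  then obtain F where F: "finite F" "F \<subseteq> C" "UNIV \<subseteq> \<Union>F" by blast
  then obtain P where P: "finite P" "F = (\<lambda>x. {y. agree (nx x) x y}) ` P"
    unfolding C_def by (meson finite_subset_image)
  define N where "N = Max (insert 0 (nx ` P))"
  have "\<forall>x y. agree N x y \<longrightarrow> d x y < e"
  proof (intro allI impI)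
    fix x y assume a: "agree N x y"
    obtain p where p: "p \<in> P" "agree (nx p) p x" using F(3) P(2) by blast
    have "nx p \<le> N" unfolding N_def using P(1) p(1) by auto
    hence "agree (nx p) p y" using a p(2) agree_mono agree_trans by blast
    hence "d p x < e/2" "d p y < e/2" using nx p(2) by blast+
    thus "d x y < e" using triangle[of x p y] commute[of x p] by simp
  qed
  thus ?thesis by blast
qed

lemma unif: "\<exists>\<eta>>0. \<forall>x y. d x y < \<eta> \<longrightarrow> agree N x y"
proof -
  define C where "C = (\<lambda>x. {y. agree N x y}) ` UNIV"
  have "\<exists>\<epsilon>>0. \<forall>x \<in> UNIV. \<exists>U \<in> C. mball x \<epsilon> \<subseteq> U"
    by (rule lebesgue_number[OF compact_m]) (auto simp: C_def mtop openin_agree)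
  then obtain e where e: "e > 0" "\<forall>x. \<exists>U \<in> C. mball x e \<subseteq> U" by blast
  have "\<forall>x y. d x y < e \<longrightarrow> agree N x y"
  proof (intro allI impI)
    fix x y assume a: "d x y < e"
    obtain p where "mball x e \<subseteq> {y. agree N p y}" using e(2) unfolding C_def by blast
    hence "agree N p x" "agree N p y" using a e(1) by auto
    thus "agree N x y" by (meson agree_sym agree_trans)
  qed
  thus ?thesis using e(1) by blast
qed

end

context S64 begin

lemma h_bij: "bij h"
  using homeomorphic_imp_surjective_map[OF hom] homeomorphic_imp_injective_map[OF hom]
  by (simp add: bij_def)

definition hi where "hi = inv h"
lemma h_hi[simp]: "h (hi y) = y" using h_bij unfolding hi_def by (simp add: bij_is_surj surj_f_inv_f)
lemma hi_h[simp]: "hi (h x) = x" using h_bij unfolding hi_def by (simp add: bij_is_inj inv_f_f)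
lemma iso_hi: "d (hi x) (hi y) = d x y" using iso[of "hi x" "hi y"] by simp
lemma iso_hn: "d ((h^^n) x) ((h^^n) y) = d x y" by (induction n) (simp_all add: iso)
lemma iso_hin: "d ((hi^^n) x) ((hi^^n) y) = d x y" by (induction n) (simp_all add: iso_hi)

lemma hin_hn[simp]: "(hi^^n) ((h^^n) x) = x"
proof (induction n arbitrary: x)
  case (Suc n)
  have "(h^^Suc n) x = (h^^n) (h x)" by (simp add: funpow_swap1)
  hence "(hi^^Suc n) ((h^^Suc n) x) = hi ((hi^^n) ((h^^n) (h x)))" by simp
  also have "\<dots> = x" using Suc by simp
  finally show ?case .
qed simp

lemma hn_hin[simp]: "(h^^n) ((hi^^n) x) = x"
proof (induction n arbitrary: x)
  case (Suc n)
  have "(hi^^Suc n) x = (hi^^n) (hi x)" by (simp add: funpow_swap1)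
  hence "(h^^Suc n) ((hi^^Suc n) x) = h ((h^^n) ((hi^^n) (hi x)))" by simp
  also have "\<dots> = x" using Suc by simp
  finally show ?case .
qed simp

definition hinv where "hinv S \<longleftrightarrow> (\<forall>y. h y \<in> S \<longleftrightarrow> y \<in> S)"

lemma hinv_h: "hinv S \<Longrightarrow> h y \<in> S \<longleftrightarrow> y \<in> S" by (simp add: hinv_def)
lemma hinv_hi: "hinv S \<Longrightarrow> hi y \<in> S \<longleftrightarrow> y \<in> S"
  by (metis h_hi hinv_def)
lemma hinv_hn: "hinv S \<Longrightarrow> (h^^n) y \<in> S \<longleftrightarrow> y \<in> S"
  by (induction n) (simp_all add: hinv_h)
lemma hinv_hin: "hinv S \<Longrightarrow> (hi^^n) y \<in> S \<longleftrightarrow> y \<in> S"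
  by (induction n) (simp_all add: hinv_hi)
lemma hinv_Int: "hinv A \<Longrightarrow> hinv B \<Longrightarrow> hinv (A \<inter> B)" by (simp add: hinv_def)
lemma hinv_Un: "hinv A \<Longrightarrow> hinv B \<Longrightarrow> hinv (A \<union> B)" by (simp add: hinv_def)
lemma hinv_Diff: "hinv A \<Longrightarrow> hinv B \<Longrightarrow> hinv (A - B)" by (simp add: hinv_def)
lemma hinv_Compl: "hinv A \<Longrightarrow> hinv (- A)" by (simp add: hinv_def)
lemma hinv_UNIV[simp]: "hinv UNIV" and hinv_empty[simp]: "hinv {}" by (simp_all add: hinv_def)
lemma hinv_UN: "(\<And>i. i \<in> I \<Longrightarrow> hinv (A i)) \<Longrightarrow> hinv (\<Union>i\<in>I. A i)" by (simp add: hinv_def)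
lemma hinv_INT: "(\<And>i. i \<in> I \<Longrightarrow> hinv (A i)) \<Longrightarrow> hinv (\<Inter>i\<in>I. A i)" by (simp add: hinv_def)

definition uclo where "uclo S \<longleftrightarrow> (\<exists>\<eta>>0. \<forall>x y. d x y < \<eta> \<longrightarrow> (x \<in> S \<longleftrightarrow> y \<in> S))"

lemma uclo_open: assumes "uclo S" shows "openin cantor_top S"
proof -
  obtain e where e: "e>0" "\<forall>x y. d x y < e \<longrightarrow> (x\<in>S \<longleftrightarrow> y\<in>S)" using assms uclo_def by auto
  have "\<forall>x\<in>S. mball x e \<subseteq> S" using e(2) by auto
  thus ?thesis unfolding mtop[symmetric] openin_mtopology using e(1) by blast
qed

lemma uclo_Compl: "uclo S \<Longrightarrow> uclo (- S)" by (auto simp: uclo_def)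
lemma uclo_closed: "uclo S \<Longrightarrow> closedin cantor_top S"
  using uclo_open[OF uclo_Compl] by (simp add: closedin_def Compl_eq_Diff_UNIV)
lemma uclo_empty[simp]: "uclo {}" and uclo_UNIV[simp]: "uclo UNIV" by (auto simp: uclo_def intro: exI[of _ 1])
lemma uclo_Int: assumes "uclo A" "uclo B" shows "uclo (A \<inter> B)"
proof -
  obtain a b where "a > 0" "b > 0" "\<forall>x y. d x y < a \<longrightarrow> (x \<in> A \<longleftrightarrow> y \<in> A)"
     "\<forall>x y. d x y < b \<longrightarrow> (x \<in> B \<longleftrightarrow> y \<in> B)" using assms by (auto simp: uclo_def)
  thus ?thesis unfolding uclo_def by (intro exI[of _ "min a b"]) auto
qed
lemma uclo_Un: assumes "uclo A" "uclo B" shows "uclo (A \<union> B)"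
proof -
  have "uclo (- (- A \<inter> - B))" by (rule uclo_Compl[OF uclo_Int[OF uclo_Compl[OF assms(1)] uclo_Compl[OF assms(2)]]])
  thus ?thesis by simp
qed
lemma uclo_Diff: "uclo A \<Longrightarrow> uclo B \<Longrightarrow> uclo (A - B)"
  by (simp add: Diff_eq uclo_Compl uclo_Int)
lemma uclo_UN: "finite I \<Longrightarrow> (\<And>i. i \<in> I \<Longrightarrow> uclo (A i)) \<Longrightarrow> uclo (\<Union>i\<in>I. A i)"
  by (induction I rule: finite_induct) (auto intro: uclo_Un)
lemma uclo_INT: "finite I \<Longrightarrow> (\<And>i. i \<in> I \<Longrightarrow> uclo (A i)) \<Longrightarrow> uclo (\<Inter>i\<in>I. A i)"
  by (induction I rule: finite_induct) (auto intro: uclo_Int)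
lemma uclo_agree: "uclo {y. agree N x y}"
proof -
  obtain e where "e > 0" "\<forall>a b. d a b < e \<longrightarrow> agree N a b" using unif by blast
  have "\<forall>a b. d a b < e \<longrightarrow> (a \<in> {y. agree N x y} \<longleftrightarrow> b \<in> {y. agree N x y})"
  proof (intro allI impI)
    fix a b assume "d a b < e"
    hence "agree N a b" using \<open>\<forall>a b. d a b < e \<longrightarrow> agree N a b\<close> by blast
    thus "a \<in> {y. agree N x y} \<longleftrightarrow> b \<in> {y. agree N x y}"
      using agree_sym agree_trans by (metis mem_Collect_eq)
  qed
  thus ?thesis unfolding uclo_def using \<open>e > 0\<close> by blast
qed

definition Sat where "Sat W = {y. \<exists>n. (h^^n) y \<in> W \<or> (hi^^n) y \<in> W}"

lemma Sat_sub: "W \<subseteq> Sat W" unfolding Sat_def by (auto intro: exI[of _ 0])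

lemma hinv_Sat: "hinv (Sat W)"
  unfolding hinv_def
proof (intro allI iffI)
  fix y assume "h y \<in> Sat W"
  then obtain n where "(h^^n) (h y) \<in> W \<or> (hi^^n) (h y) \<in> W" unfolding Sat_def by blast
  thus "y \<in> Sat W"
  proof
    assume "(h^^n) (h y) \<in> W"
    hence "(h^^Suc n) y \<in> W" by (simp add: funpow_swap1)
    thus ?thesis unfolding Sat_def by blast
  next
    assume a: "(hi^^n) (h y) \<in> W"
    show ?thesis
    proof (cases n)
      case 0 then have "(h^^1) y \<in> W" using a by simp
      thus ?thesis unfolding Sat_def by blast
    next
      case (Suc m) then have "(hi^^m) y \<in> W" using a by (simp add: funpow_swap1)
      thus ?thesis unfolding Sat_def by blast
    qed
  qed
next
  fix y assume "y \<in> Sat W"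
  then obtain n where "(h^^n) y \<in> W \<or> (hi^^n) y \<in> W" unfolding Sat_def by blast
  thus "h y \<in> Sat W"
  proof
    assume a: "(h^^n) y \<in> W"
    show ?thesis
    proof (cases n)
      case 0 then have "(hi^^1) (h y) \<in> W" using a by simp
      thus ?thesis unfolding Sat_def by blast
    next
      case (Suc m) then have "(h^^m) (h y) \<in> W" using a by (simp add: funpow_swap1)
      thus ?thesis unfolding Sat_def by blast
    qed
  next
    assume "(hi^^n) y \<in> W"
    hence "(hi^^Suc n) (h y) \<in> W" by (simp add: funpow_swap1)
    thus ?thesis unfolding Sat_def by blast
  qed
qed

lemma Sat_sub_inv: "hinv U \<Longrightarrow> W \<subseteq> U \<Longrightarrow> Sat W \<subseteq> U"
  unfolding Sat_def using hinv_hn hinv_hin by blast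

lemma uclo_Sat: assumes "uclo W" shows "uclo (Sat W)"
proof -
  obtain e where e: "e > 0" "\<forall>x y. d x y < e \<longrightarrow> (x \<in> W \<longleftrightarrow> y \<in> W)" using assms by (auto simp: uclo_def)
  have "\<forall>x y. d x y < e \<longrightarrow> (x \<in> Sat W \<longleftrightarrow> y \<in> Sat W)"
  proof (intro allI impI)
    fix x y assume a: "d x y < e"
    have "\<And>n. (h^^n) x \<in> W \<longleftrightarrow> (h^^n) y \<in> W" using e(2) a iso_hn by metis
    moreover have "\<And>n. (hi^^n) x \<in> W \<longleftrightarrow> (hi^^n) y \<in> W" using e(2) a iso_hin by metis
    ultimately show "x \<in> Sat W \<longleftrightarrow> y \<in> Sat W" unfolding Sat_def by blast
  qed
  thus ?thesis using e(1) unfolding uclo_def by blast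
qed

lemma recur: assumes "e > 0" shows "\<exists>n\<ge>1. d x ((h^^n) x) < e"
proof -
  obtain N where N: "\<forall>x y. agree N x y \<longrightarrow> d x y < e" using fine assms by blast
  define f where "f i = map ((h^^i) x) [0..<N]" for i
  have fs: "f ` {..2^N} \<subseteq> {xs. set xs \<subseteq> UNIV \<and> length xs = N}" by (auto simp: f_def)
  have "\<not> inj_on f {..2^N}"
  proof
    assume "inj_on f {..2^N}"
    moreover have fin: "finite {xs::bool list. set xs \<subseteq> UNIV \<and> length xs = N}"
      by (rule finite_lists_length_eq) simp
    ultimately have "card {..(2::nat)^N} \<le> card {xs::bool list. set xs \<subseteq> UNIV \<and> length xs = N}"
      using fs by (intro card_inj_on_le) auto
    moreover have "card {xs::bool list. length xs = N} = 2^N"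
      using card_lists_length_eq[of "UNIV::bool set" N] by simp
    ultimately show False by simp
  qed
  then obtain i j where ij: "i \<noteq> j" "f i = f j" by (auto simp: inj_on_def)
  have main: "i < j \<Longrightarrow> f i = f j \<Longrightarrow> \<exists>n\<ge>1. d x ((h^^n) x) < e" for i j
  proof -
    assume a: "i < j" "f i = f j"
    have "agree N ((h^^i) x) ((h^^j) x)"
      unfolding agree_def
    proof (intro allI impI)
      fix k assume "k < N"
      thus "(h ^^ i) x k = (h ^^ j) x k" using arg_cong[OF a(2), of "\<lambda>l. l ! k"] by (simp add: f_def)
    qed
    hence "d ((h^^i) x) ((h^^j) x) < e" using N by blast
    moreover have "(h^^j) x = (h^^i) ((h^^(j-i)) x)"
    proof -
      have "(h^^(i + (j-i))) x = (h^^i) ((h^^(j-i)) x)" by (simp add: funpow_add)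
      thus ?thesis using a(1) by simp
    qed
    ultimately have "d x ((h^^(j-i)) x) < e" by (simp add: iso_hn)
    thus ?thesis using a(1) by (intro exI[of _ "j-i"]) auto
  qed
  show ?thesis
  proof (cases "i < j")
    case True thus ?thesis using main[of i j] ij(2) by blast
  next
    case False then have "j < i" using ij by auto
    thus ?thesis using main[of j i] ij(2) by simp
  qed
qed

lemma BI: assumes "closedin cantor_top C" "\<forall>x\<in>C. h x \<in> C" "x \<in> C" shows "hi x \<in> C"
proof (rule ccontr)
  assume "hi x \<notin> C"
  hence "openin cantor_top (UNIV - C)" "hi x \<in> UNIV - C" using assms(1) by (auto simp: closedin_def)
  then obtain r where r: "r > 0" "\<forall>y. d (hi x) y < r \<longrightarrow> y \<in> UNIV - C" using open_ball_ex by blast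
  obtain n where n: "n \<ge> 1" "d x ((h^^n) x) < r" using recur r(1) by blast
  have hC: "(h^^m) x \<in> C" for m by (induction m) (use assms in auto)
  obtain m where m: "n = Suc m" using n(1) by (cases n) auto
  have "(h^^n) x = h ((h^^(n-1)) x)" using m by simp
  hence "d (hi x) ((h^^(n-1)) x) < r" using n(2) iso_hi[of x "(h^^n) x"] by simp
  thus False using r(2) hC by blast
qed

lemma BI_hinv: assumes "closedin cantor_top C" "\<forall>x\<in>C. h x \<in> C" shows "hinv C"
  unfolding hinv_def
proof (intro allI iffI)
  fix y assume "h y \<in> C"
  hence "hi (h y) \<in> C" using BI[OF assms] by blast
  thus "y \<in> C" by simp
qed (use assms in blast)

definition Orb where "Orb y = cantor_top closure_of (orb y h)"

lemma Orb_closed: "closedin cantor_top (Orb y)" by (simp add: Orb_def)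
lemma y_Orb: "y \<in> Orb y"
proof -
  have "y \<in> orb y h" unfolding orb_def by (auto intro: exI[of _ 0])
  thus ?thesis unfolding Orb_def using closure_of_subset[of "orb y h" cantor_top] by auto
qed
lemma Orb_fwd: "\<forall>x\<in>Orb y. h x \<in> Orb y"
proof -
  have cm: "continuous_map cantor_top cantor_top h" using hom homeomorphic_imp_continuous_map by blast
  have "h ` orb y h \<subseteq> orb y h"
  proof
    fix z assume "z \<in> h ` orb y h"
    then obtain n where "z = h ((h^^n) y)" unfolding orb_def by blast
    hence "z = (h^^Suc n) y" by simp
    thus "z \<in> orb y h" unfolding orb_def by blast
  qed
  have "h ` Orb y \<subseteq> cantor_top closure_of (h ` orb y h)"
    unfolding Orb_def by (rule continuous_map_image_closure_subset[OF cm])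
  also have "\<dots> \<subseteq> Orb y" unfolding Orb_def by (rule closure_of_mono) fact
  finally have "h ` Orb y \<subseteq> Orb y" .
  thus ?thesis by blast
qed
lemma hinv_Orb: "hinv (Orb y)" using BI_hinv Orb_closed Orb_fwd by blast

lemma Sep:
  assumes "openin cantor_top U" "hinv U" "y \<in> U" "z \<notin> Orb y"
  shows "\<exists>S. uclo S \<and> hinv S \<and> y \<in> S \<and> S \<subseteq> U \<and> z \<notin> S"
proof -
  have "openin cantor_top (UNIV - Orb y)" using Orb_closed[of y] unfolding closedin_def by simp
  moreover have "z \<in> UNIV - Orb y" using assms(4) by simp
  ultimately have "\<exists>r>0. \<forall>w. d z w < r \<longrightarrow> w \<in> UNIV - Orb y" by (rule open_ball_ex)
  then obtain r where r0: "r > 0" "\<forall>w. d z w < r \<longrightarrow> w \<in> UNIV - Orb y" by blast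
  have r: "r > 0" "\<forall>w. d z w < r \<longrightarrow> w \<notin> Orb y" using r0 by auto
  obtain N1 where N1: "\<forall>a b. agree N1 a b \<longrightarrow> d a b < r" using fine r(1) by blast
  obtain N2 where N2: "{w. agree N2 y w} \<subseteq> U" using open_basis_agree assms(1,3) by blast
  define W where "W = {w. agree (max N1 N2) y w}"
  have WU: "W \<subseteq> U"
  proof
    fix w assume "w \<in> W"
    hence "agree N2 y w" unfolding W_def using agree_mono[of "max N1 N2" y w N2] by simp
    thus "w \<in> U" using N2 by blast
  qed
  have Wr: "w \<in> W \<Longrightarrow> d y w < r" for w
  proof -
    assume "w \<in> W"
    hence "agree N1 y w" unfolding W_def using agree_mono[of "max N1 N2" y w N1] by simp
    thus "d y w < r" using N1 by blast
  qed
  define S where "S = Sat W"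
  have "z \<notin> S"
  proof
    assume "z \<in> S"
    then obtain n where "(h^^n) z \<in> W \<or> (hi^^n) z \<in> W" unfolding S_def Sat_def by blast
    thus False
    proof
      assume "(h^^n) z \<in> W"
      hence "d y ((h^^n) z) < r" by (rule Wr)
      hence "d ((hi^^n) y) z < r" using iso_hin[of n y "(h^^n) z"] by simp
      moreover have "(hi^^n) y \<in> Orb y" using hinv_hin[OF hinv_Orb] y_Orb by blast
      ultimately show False using r(2) commute[of z "(hi^^n) y"] by auto
    next
      assume "(hi^^n) z \<in> W"
      hence "d y ((hi^^n) z) < r" by (rule Wr)
      hence "d ((h^^n) y) z < r" using iso_hn[of n y "(hi^^n) z"] by simp
      moreover have "(h^^n) y \<in> Orb y" using hinv_hn[OF hinv_Orb] y_Orb by blast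
      ultimately show False using r(2) commute[of z "(h^^n) y"] by auto
    qed
  qed
  moreover have "y \<in> S" unfolding S_def using Sat_sub[of W] unfolding W_def by auto
  moreover have "S \<subseteq> U" unfolding S_def using Sat_sub_inv assms(2) WU by blast
  moreover have "uclo S" unfolding S_def W_def by (intro uclo_Sat uclo_agree)
  moreover have "hinv S" unfolding S_def by (rule hinv_Sat)
  ultimately show ?thesis by blast
qed

lemma Split2:
  assumes "uclo A" "hinv A" "A \<noteq> {}"
  shows "\<exists>S. uclo S \<and> hinv S \<and> S \<subseteq> A \<and> S \<noteq> {} \<and> A - S \<noteq> {}"
proof -
  obtain y where y: "y \<in> A" using assms(3) by blast
  have "\<exists>z\<in>A. z \<notin> Orb y"
  proof (rule ccontr)
    assume "\<not> ?thesis"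
    hence "A \<subseteq> Orb y" by blast
    hence "A \<subseteq> cantor_top interior_of Orb y" using interior_of_maximal uclo_open assms(1) by blast
    thus False using orbnd[of y] y unfolding nowhere_dense_in_def Orb_def by blast
  qed
  then obtain z where z: "z \<in> A" "z \<notin> Orb y" by blast
  obtain S where S: "uclo S" "hinv S" "y \<in> S" "S \<subseteq> A" "z \<notin> S"
    using Sep[OF uclo_open[OF assms(1)] assms(2) y z(2)] by blast
  thus ?thesis using z(1) by blast
qed

end

context S64 begin

definition ppart :: "cantor set \<Rightarrow> nat \<Rightarrow> (nat \<Rightarrow> cantor set) \<Rightarrow> bool" where
  "ppart A n P \<longleftrightarrow> (\<forall>c. uclo (P c) \<and> hinv (P c)) \<and> (\<forall>c c'. c \<noteq> c' \<longrightarrow> P c \<inter> P c' = {})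
     \<and> (\<forall>c\<ge>n. P c = {}) \<and> (\<Union>c. P c) = A"

lemma ppartI:
  assumes "\<And>c. uclo (P c)" "\<And>c. hinv (P c)" "\<And>c c'. c \<noteq> c' \<Longrightarrow> P c \<inter> P c' = {}"
    "\<And>c. c \<ge> n \<Longrightarrow> P c = {}" "(\<Union>c. P c) = A"
  shows "ppart A n P" using assms unfolding ppart_def by blast

lemma ppart_sub: "ppart A n P \<Longrightarrow> P c \<subseteq> A" unfolding ppart_def by blast

lemma Part:
  assumes "uclo A" "hinv A" "A \<noteq> {}"
  shows "\<exists>P. ppart A (Suc k) P \<and> (\<forall>c\<le>k. P c \<noteq> {})"
proof (induction k)
  case 0
  define P where "P = (\<lambda>c::nat. if c = 0 then A else {})"
  have "ppart A (Suc 0) P" unfolding ppart_def P_def using assms by auto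
  moreover have "\<forall>c\<le>0. P c \<noteq> {}" using assms by (simp add: P_def)
  ultimately show ?case by blast
next
  case (Suc k)
  then obtain P where P: "ppart A (Suc k) P" "\<forall>c\<le>k. P c \<noteq> {}" by blast
  have pk: "uclo (P k)" "hinv (P k)" "P k \<noteq> {}" using P unfolding ppart_def by auto
  obtain S where S: "uclo S" "hinv S" "S \<subseteq> P k" "S \<noteq> {}" "P k - S \<noteq> {}"
    using Split2[OF pk] by blast
  define Q where "Q = P(k := S, Suc k := P k - S)"
  have Pdisj: "\<And>c c'. c \<noteq> c' \<Longrightarrow> P c \<inter> P c' = {}" and Pbig: "\<And>c. c \<ge> Suc k \<Longrightarrow> P c = {}"
    and Pun: "(\<Union>c. P c) = A" and Pu: "\<And>c. uclo (P c) \<and> hinv (P c)"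
    using P(1) unfolding ppart_def by auto
  have Qsub: "Q c \<subseteq> P (min c k)" for c
    unfolding Q_def using S(3) Pbig[of c] by (auto simp: min_def)
  have "ppart A (Suc (Suc k)) Q"
  proof (rule ppartI)
    fix c show "uclo (Q c)"
      unfolding Q_def using Pu S pk by (auto intro: uclo_Diff)
  next
    fix c show "hinv (Q c)"
      unfolding Q_def using Pu S pk by (auto intro: hinv_Diff)
  next
    fix c c' :: nat assume "c \<noteq> c'"
    show "Q c \<inter> Q c' = {}"
    proof (cases "min c k = min c' k")
      case False
      thus ?thesis using Qsub[of c] Qsub[of c'] Pdisj[OF False] by blast
    next
      case True
      hence "c \<ge> k \<and> c' \<ge> k" using \<open>c \<noteq> c'\<close> by (auto simp: min_def split: if_splits)
      moreover have "c \<ge> Suc (Suc k) \<Longrightarrow> Q c = {}" for c unfolding Q_def using Pbig by auto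
      ultimately show ?thesis using \<open>c \<noteq> c'\<close> unfolding Q_def
        by (cases "c = k"; cases "c' = k"; cases "c = Suc k"; cases "c' = Suc k") auto
    qed
  next
    fix c :: nat assume "c \<ge> Suc (Suc k)" thus "Q c = {}" unfolding Q_def using Pbig by auto
  next
    have "(\<Union>c. Q c) = (\<Union>c. P c)"
    proof
      show "(\<Union>c. Q c) \<subseteq> (\<Union>c. P c)" using Qsub by blast
      show "(\<Union>c. P c) \<subseteq> (\<Union>c. Q c)"
      proof
        fix x assume "x \<in> (\<Union>c. P c)"
        then obtain c where c: "x \<in> P c" by blast
        show "x \<in> (\<Union>c. Q c)"
        proof (cases "c = k")
          case True
          thus ?thesis using c unfolding Q_def
            by (cases "x \<in> S") (auto intro: UN_I[of k] UN_I[of "Suc k"])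
        next
          case False
          hence "c \<noteq> Suc k" using c Pbig by auto
          thus ?thesis using c False unfolding Q_def by (auto intro: UN_I[of c])
        qed
      qed
    qed
    thus "(\<Union>c. Q c) = A" using Pun by simp
  qed
  moreover have "\<forall>c\<le>Suc k. Q c \<noteq> {}" unfolding Q_def using P(2) S by auto
  ultimately show ?case by blast
qed

lemma WP:
  assumes "uclo A" "hinv A" "closedin cantor_top M" "hinv M" "A - M \<noteq> {}"
  shows "\<exists>P. ppart A (Suc k) P \<and> (\<forall>c. 1 \<le> c \<and> c \<le> k \<longrightarrow> P c \<noteq> {} \<and> P c \<inter> M = {})"
proof (cases "k = 0")
  case True
  define P where "P = (\<lambda>c::nat. if c = 0 then A else {})"
  have "ppart A (Suc 0) P" unfolding ppart_def P_def using assms by auto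
  thus ?thesis using True by auto
next
  case False
  then obtain k' where k': "k = Suc k'" by (cases k) auto
  obtain y where y: "y \<in> A - M" using assms(5) by blast
  have U: "openin cantor_top (A - M)" using uclo_open[OF assms(1)] assms(3) by blast
  obtain N where N: "{w. agree N y w} \<subseteq> A - M" using open_basis_agree[OF U y] by blast
  define S where "S = Sat {w. agree N y w}"
  have S: "uclo S" "hinv S" "S \<subseteq> A - M" "S \<noteq> {}"
  proof -
    show "uclo S" unfolding S_def by (intro uclo_Sat uclo_agree)
    show "hinv S" unfolding S_def by (rule hinv_Sat)
    show "S \<subseteq> A - M" unfolding S_def using N by (intro Sat_sub_inv hinv_Diff assms)
    show "S \<noteq> {}" unfolding S_def using Sat_sub[of "{w. agree N y w}"] agree_refl[of N y] by blast
  qed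
  obtain Q where Q: "ppart S (Suc k') Q" "\<forall>c\<le>k'. Q c \<noteq> {}" using Part[OF S(1,2,4)] by blast
  have Qd: "\<And>c c'. c \<noteq> c' \<Longrightarrow> Q c \<inter> Q c' = {}" and Qbig: "\<And>c. c \<ge> Suc k' \<Longrightarrow> Q c = {}"
    and Qun: "(\<Union>c. Q c) = S" and Qu: "\<And>c. uclo (Q c) \<and> hinv (Q c)"
    using Q(1) unfolding ppart_def by auto
  have QS: "Q c \<subseteq> S" for c using Qun by blast
  define P where "P = (\<lambda>c. if c = 0 then A - S else Q (c - 1))"
  have "ppart A (Suc k) P"
  proof (rule ppartI)
    fix c show "uclo (P c)" unfolding P_def using Qu S assms
      by (auto intro: uclo_Diff)
  next
    fix c show "hinv (P c)" unfolding P_def using Qu S assms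
      by (auto intro: hinv_Diff)
  next
    fix c c' :: nat assume cc: "c \<noteq> c'"
    show "P c \<inter> P c' = {}"
    proof (cases "c = 0 \<or> c' = 0")
      case True thus ?thesis unfolding P_def using QS cc by auto
    next
      case False
      hence "c - 1 \<noteq> c' - 1" using cc by auto
      thus ?thesis unfolding P_def using Qd[of "c - 1" "c' - 1"] False by auto
    qed
  next
    fix c :: nat assume "c \<ge> Suc k" thus "P c = {}" unfolding P_def k' using Qbig by auto
  next
    have "(\<Union>c. P c) = (A - S) \<union> (\<Union>c. Q c)"
    proof
      show "(\<Union>c. P c) \<subseteq> (A - S) \<union> (\<Union>c. Q c)" unfolding P_def by auto
      show "(A - S) \<union> (\<Union>c. Q c) \<subseteq> (\<Union>c. P c)"
      proof
        fix x assume "x \<in> (A - S) \<union> (\<Union>c. Q c)"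
        thus "x \<in> (\<Union>c. P c)"
        proof
          assume "x \<in> A - S" thus ?thesis unfolding P_def by (auto intro: UN_I[of 0])
        next
          assume "x \<in> (\<Union>c. Q c)"
          then obtain c where "x \<in> Q c" by blast
          hence "x \<in> P (Suc c)" unfolding P_def by simp
          thus ?thesis by blast
        qed
      qed
    qed
    thus "(\<Union>c. P c) = A" using Qun S(3) by auto
  qed
  moreover have "\<forall>c. 1 \<le> c \<and> c \<le> k \<longrightarrow> P c \<noteq> {} \<and> P c \<inter> M = {}"
  proof (intro allI impI)
    fix c assume c: "1 \<le> c \<and> c \<le> k"
    hence "P c = Q (c - 1)" "c - 1 \<le> k'" unfolding P_def k' by auto
    thus "P c \<noteq> {} \<and> P c \<inter> M = {}" using Q(2) QS S(3) by blast
  qed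
  ultimately show ?thesis by blast
qed

definition MM :: "nat \<Rightarrow> cantor set" where "MM i = (\<Union>k\<le>i. K k)"

lemma MM_closed: "closedin cantor_top (MM i)"
  unfolding MM_def by (intro closedin_Union) (auto simp: Kcl)

lemma K_hinv: "hinv (K k)"
  using BI_hinv[OF Kcl[of k]] Kinv[of k] by blast

lemma MM_hinv: "hinv (MM i)" unfolding MM_def by (intro hinv_UN K_hinv)

lemma ND: assumes "openin cantor_top U" "U \<noteq> {}" shows "U - K k \<noteq> {}"
proof
  assume "U - K k = {}"
  hence "U \<subseteq> K k" by blast
  hence "U \<subseteq> cantor_top interior_of K k" using interior_of_maximal assms(1) by blast
  moreover have "cantor_top interior_of K k = {}"
    using Knd[of k] closure_of_closedin[OF Kcl[of k]] unfolding nowhere_dense_in_def by simp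
  ultimately show False using assms(2) by blast
qed

lemma MM_nd: assumes "openin cantor_top U" "U \<noteq> {}" shows "U - MM i \<noteq> {}"
proof (induction i)
  case 0 thus ?case using ND[OF assms, of 0] by (simp add: MM_def)
next
  case (Suc i)
  have o: "openin cantor_top (U - MM i)" using assms(1) MM_closed by blast
  have "U - MM (Suc i) = (U - MM i) - K (Suc i)" unfolding MM_def by (auto simp: atMost_Suc)
  thus ?case using ND[OF o Suc] by simp
qed

definition ar :: "nat \<Rightarrow> nat" where "ar l = (if even l then Suc ((l div 2 + 2)^2) else 2)"

lemma ar_ge2: "ar l \<ge> 2" unfolding ar_def by (auto simp: power2_eq_square)

definition cylL :: "bool list \<Rightarrow> cantor set" where "cylL bs = {w. \<forall>i<length bs. w i = bs ! i}"

lemma uclo_cylL: "uclo (cylL bs)"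
proof -
  obtain e where e: "e > 0" "\<forall>a b. d a b < e \<longrightarrow> agree (length bs) a b" using unif by blast
  have "\<forall>a b. d a b < e \<longrightarrow> (a \<in> cylL bs \<longleftrightarrow> b \<in> cylL bs)"
    using e(2) unfolding cylL_def agree_def by auto
  thus ?thesis using e(1) unfolding uclo_def by blast
qed

definition fpart :: "nat \<Rightarrow> nat \<Rightarrow> cantor set" where
  "fpart l c = (if c = 0 then - Sat (cylL (from_nat (l div 2))) else if c = 1 then Sat (cylL (from_nat (l div 2))) else {})"

lemma fpart_ppart: "ppart UNIV 2 (fpart l)"
  unfolding ppart_def fpart_def
  by (auto intro: uclo_Sat uclo_cylL uclo_Compl hinv_Sat hinv_Compl)

definition nodeG :: "(nat \<Rightarrow> nat \<Rightarrow> cantor set) \<Rightarrow> nat list \<Rightarrow> cantor set" where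
  "nodeG GG s = {y. \<forall>j<length s. y \<in> GG j (s!j)}"
definition Sl :: "nat \<Rightarrow> nat list set" where "Sl l = {s. length s = l \<and> (\<forall>j<l. s!j < ar j)}"

definition wspec :: "nat \<Rightarrow> cantor set \<Rightarrow> (nat \<Rightarrow> cantor set) \<Rightarrow> bool" where
  "wspec l A P \<longleftrightarrow> ppart A (ar l) P \<and> (A \<noteq> {} \<longrightarrow> (\<forall>c. 1 \<le> c \<and> c < ar l \<longrightarrow> P c \<noteq> {} \<and> P c \<inter> MM (l div 2) = {}))"

definition wpart :: "nat \<Rightarrow> cantor set \<Rightarrow> nat \<Rightarrow> cantor set" where
  "wpart l A = (SOME P. wspec l A P)"

lemma wpart_spec: assumes "uclo A" "hinv A" shows "wspec l A (wpart l A)"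
proof -
  have "\<exists>P. wspec l A P"
  proof (cases "A = {}")
    case True
    have "ppart A (ar l) (\<lambda>_. {})" unfolding ppart_def True by auto
    thus ?thesis unfolding wspec_def using True by blast
  next
    case False
    have "A - MM (l div 2) \<noteq> {}" using MM_nd[OF uclo_open[OF assms(1)] False] .
    then obtain P where P1: "ppart A (Suc (ar l - 1)) P" and
       P2: "\<forall>c. 1 \<le> c \<and> c \<le> ar l - 1 \<longrightarrow> P c \<noteq> {} \<and> P c \<inter> MM (l div 2) = {}"
      using WP[OF assms MM_closed MM_hinv] by blast
    have "Suc (ar l - 1) = ar l" using ar_ge2[of l] by simp
    hence "ppart A (ar l) P" using P1 by simp
    moreover have "\<forall>c. 1 \<le> c \<and> c < ar l \<longrightarrow> P c \<noteq> {} \<and> P c \<inter> MM (l div 2) = {}"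
      using P2 by auto
    ultimately show ?thesis unfolding wspec_def by blast
  qed
  thus ?thesis unfolding wpart_def by (rule someI_ex)
qed

definition newlev :: "nat \<Rightarrow> (nat \<Rightarrow> nat \<Rightarrow> cantor set) \<Rightarrow> nat \<Rightarrow> cantor set" where
  "newlev l GG = (if odd l then fpart l else (\<lambda>c. \<Union>s\<in>Sl l. wpart l (nodeG GG s) c))"

primrec Gs :: "nat \<Rightarrow> nat \<Rightarrow> nat \<Rightarrow> cantor set" where
  "Gs 0 = (\<lambda>_ _. {})"
| "Gs (Suc l) = (Gs l)(l := newlev l (Gs l))"

definition G :: "nat \<Rightarrow> nat \<Rightarrow> cantor set" where "G l = Gs (Suc l) l"

lemma Gs_G: "j < n \<Longrightarrow> Gs n j = G j"
proof (induction n)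
  case (Suc n) thus ?case by (cases "j = n") (auto simp: G_def)
qed simp

lemma G_eq: "G l = (if odd l then fpart l else (\<lambda>c. \<Union>s\<in>Sl l. wpart l (nodeG G s) c))"
proof -
  have "nodeG (Gs l) s = nodeG G s" if "s \<in> Sl l" for s
    using that Gs_G unfolding nodeG_def Sl_def by auto
  hence "newlev l (Gs l) = (if odd l then fpart l else (\<lambda>c. \<Union>s\<in>Sl l. wpart l (nodeG G s) c))"
    unfolding newlev_def by auto
  thus ?thesis unfolding G_def by simp
qed

lemma Sl_finite: "finite (Sl l)"
proof -
  have "Sl l \<subseteq> {s. set s \<subseteq> {..<Suc ((l+2)^2)} \<and> length s = l}"
  proof
    fix s assume s: "s \<in> Sl l"
    have "s ! j < Suc ((l+2)^2)" if "j < l" for j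
    proof -
      have "s ! j < ar j" using s that unfolding Sl_def by auto
      moreover have "ar j \<le> Suc ((l+2)^2)"
        unfolding ar_def using that by (auto intro!: power_mono)
      ultimately show ?thesis by linarith
    qed
    thus "s \<in> {s. set s \<subseteq> {..<Suc ((l+2)^2)} \<and> length s = l}" using s unfolding Sl_def
      by (auto simp: in_set_conv_nth)
  qed
  thus ?thesis using finite_lists_length_eq[of "{..<Suc ((l+2)^2)}" l] finite_subset by blast
qed

end

context S64 begin

definition levok where "levok l \<longleftrightarrow> ppart UNIV (ar l) (G l)"

lemma levok_in: assumes "levok j" shows "\<exists>c<ar j. x \<in> G j c"
proof -
  have "x \<in> (\<Union>c. G j c)" using assms unfolding levok_def ppart_def by auto
  then obtain c where c: "x \<in> G j c" by blast
  have "c < ar j"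
  proof (rule ccontr)
    assume "\<not> c < ar j" hence "G j c = {}" using assms unfolding levok_def ppart_def by auto
    thus False using c by simp
  qed
  thus ?thesis using c by blast
qed

lemma nodeG_Sl: "s \<in> Sl l \<Longrightarrow> nodeG G s = (\<Inter>j<l. G j (s!j))"
  unfolding nodeG_def Sl_def by auto

context
  fixes l assumes prev: "\<forall>j<l. levok j"
begin

lemma node_uclo: "s \<in> Sl l \<Longrightarrow> uclo (nodeG G s)"
  using prev unfolding nodeG_Sl levok_def ppart_def by (auto intro!: uclo_INT)

lemma node_hinv: "s \<in> Sl l \<Longrightarrow> hinv (nodeG G s)"
  using prev unfolding nodeG_Sl levok_def ppart_def by (auto intro!: hinv_INT)

lemma node_disj: assumes "s \<in> Sl l" "s' \<in> Sl l" "s \<noteq> s'" shows "nodeG G s \<inter> nodeG G s' = {}"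
proof -
  have "length s = l" "length s' = l" using assms unfolding Sl_def by auto
  then obtain j where j: "j < l" "s ! j \<noteq> s' ! j" using assms(3) nth_equalityI by metis
  have "G j (s!j) \<inter> G j (s'!j) = {}" using prev j unfolding levok_def ppart_def by blast
  thus ?thesis using j assms unfolding nodeG_Sl[OF assms(1)] nodeG_Sl[OF assms(2)] by blast
qed

lemma node_cover: "\<exists>s\<in>Sl l. x \<in> nodeG G s"
proof -
  have "\<forall>j. \<exists>c. j < l \<longrightarrow> c < ar j \<and> x \<in> G j c" using levok_in prev by blast
  then obtain cf where cf: "\<And>j. j < l \<Longrightarrow> cf j < ar j \<and> x \<in> G j (cf j)" by metis
  define s where "s = map cf [0..<l]"
  have "s \<in> Sl l" unfolding s_def Sl_def using cf by auto
  moreover have "x \<in> nodeG G s" unfolding s_def nodeG_def using cf by auto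
  ultimately show ?thesis by blast
qed

lemma levok_even: assumes "even l" shows "levok l"
proof -
  define W where "W s = wpart l (nodeG G s)" for s
  have Gl: "G l c = (\<Union>s\<in>Sl l. W s c)" for c using G_eq[of l] assms unfolding W_def by simp
  have Ws: "s \<in> Sl l \<Longrightarrow> ppart (nodeG G s) (ar l) (W s)" for s
    unfolding W_def using wpart_spec[OF node_uclo node_hinv] unfolding wspec_def by blast
  have Wsub: "s \<in> Sl l \<Longrightarrow> W s c \<subseteq> nodeG G s" for s c using Ws ppart_sub by blast
  show ?thesis unfolding levok_def
  proof (rule ppartI)
    fix c show "uclo (G l c)" unfolding Gl using Ws Sl_finite unfolding ppart_def by (auto intro!: uclo_UN)
  next
    fix c show "hinv (G l c)" unfolding Gl using Ws unfolding ppart_def by (auto intro!: hinv_UN)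
  next
    fix c c' :: nat assume cc: "c \<noteq> c'"
    show "G l c \<inter> G l c' = {}"
    proof (rule ccontr)
      assume "G l c \<inter> G l c' \<noteq> {}"
      then obtain x s s' where x: "s \<in> Sl l" "s' \<in> Sl l" "x \<in> W s c" "x \<in> W s' c'" unfolding Gl by blast
      have "s = s'" using node_disj[OF x(1,2)] Wsub[OF x(1)] Wsub[OF x(2)] x(3,4) by blast
      thus False using Ws[OF x(1)] x cc unfolding ppart_def by blast
    qed
  next
    fix c assume "c \<ge> ar l" thus "G l c = {}" unfolding Gl using Ws unfolding ppart_def by auto
  next
    show "(\<Union>c. G l c) = UNIV"
    proof (intro set_eqI iffI)
      fix x :: cantor
      obtain s where s: "s \<in> Sl l" "x \<in> nodeG G s" using node_cover by blast
      hence "x \<in> (\<Union>c. W s c)" using Ws[OF s(1)] unfolding ppart_def by blast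
      thus "x \<in> (\<Union>c. G l c)" unfolding Gl using s(1) by blast
    qed simp
  qed
qed

lemma even_nonempty:
  assumes "even l" "s \<in> Sl l" "nodeG G s \<noteq> {}" "1 \<le> c" "c < ar l"
  shows "nodeG G s \<inter> G l c \<noteq> {}"
proof -
  define W where "W s = wpart l (nodeG G s)" for s
  have Gl: "G l c = (\<Union>s\<in>Sl l. W s c)" for c using G_eq[of l] assms unfolding W_def by simp
  have "wspec l (nodeG G s) (W s)" unfolding W_def using wpart_spec[OF node_uclo node_hinv] assms(2) by blast
  hence "W s c \<noteq> {}" "W s c \<subseteq> nodeG G s" using assms unfolding wspec_def using ppart_sub by blast+
  thus ?thesis unfolding Gl using assms(2) by blast
qed

lemma even_M:
  assumes "even l" "1 \<le> c"
  shows "G l c \<inter> MM (l div 2) = {}"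
proof -
  define W where "W s = wpart l (nodeG G s)" for s
  have Gl: "G l c = (\<Union>s\<in>Sl l. W s c)" for c using G_eq[of l] assms unfolding W_def by simp
  have "W s c \<inter> MM (l div 2) = {}" if s: "s \<in> Sl l" for s
  proof -
    have sp: "wspec l (nodeG G s) (W s)" unfolding W_def using wpart_spec[OF node_uclo node_hinv] s by blast
    show ?thesis
    proof (cases "c < ar l")
      case True
      show ?thesis
      proof (cases "nodeG G s = {}")
        case True thus ?thesis using sp ppart_sub unfolding wspec_def by blast
      next
        case False thus ?thesis using sp \<open>c < ar l\<close> assms(2) unfolding wspec_def by blast
      qed
    next
      case False thus ?thesis using sp unfolding wspec_def ppart_def by auto
    qed
  qed
  thus ?thesis unfolding Gl by blast
qed

end

lemma levok_all: "levok l"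
proof (induction l rule: less_induct)
  case (less l)
  show ?case
  proof (cases "even l")
    case True thus ?thesis using levok_even less by blast
  next
    case False thus ?thesis unfolding levok_def using G_eq[of l] fpart_ppart[of l] by (simp add: ar_def)
  qed
qed

definition code :: "cantor \<Rightarrow> nat \<Rightarrow> nat" where "code x l = (LEAST c. x \<in> G l c)"

lemma code_eq: "x \<in> G l c \<Longrightarrow> code x l = c"
proof -
  assume a: "x \<in> G l c"
  have disj: "\<And>c'. c' \<noteq> c \<Longrightarrow> x \<notin> G l c'" using levok_all[of l] a unfolding levok_def ppart_def by blast
  show ?thesis unfolding code_def
  proof (rule Least_equality)
    show "x \<in> G l c" by (rule a)
  next
    fix y assume "x \<in> G l y" hence "y = c" using disj by blast
    thus "c \<le> y" by simp
  qed
qed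

lemma code_in: "x \<in> G l (code x l)" and code_lt: "code x l < ar l"
proof -
  obtain c where c: "c < ar l" "x \<in> G l c" using levok_in levok_all by blast
  show "x \<in> G l (code x l)" using c code_eq by simp
  show "code x l < ar l" using c code_eq by simp
qed

lemma code_iff: "code x l = c \<longleftrightarrow> x \<in> G l c" using code_eq code_in by blast

lemma G_hinv: "hinv (G l c)" using levok_all[of l] unfolding levok_def ppart_def by blast
lemma G_uclo: "uclo (G l c)" using levok_all[of l] unfolding levok_def ppart_def by blast

lemma code_h[simp]: "code (h x) l = code x l"
  using code_iff hinv_h[OF G_hinv] by metis

lemma code_hn[simp]: "code ((h^^n) x) l = code x l" by (induction n) auto

lemma code_hin[simp]: "code ((hi^^n) x) l = code x l"
  by (metis code_hn hn_hin)

definition nd :: "cantor \<Rightarrow> nat \<Rightarrow> cantor set" where "nd x n = {y. \<forall>j<n. code y j = code x j}"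

lemma nd_node: "nd x n = nodeG G (map (code x) [0..<n])" "map (code x) [0..<n] \<in> Sl n"
  unfolding nd_def nodeG_def Sl_def by (auto simp: code_iff code_lt)

lemma nd_uclo: "uclo (nd x n)"
  unfolding nd_node(1) using node_uclo[OF _ nd_node(2)] levok_all by blast

lemma extend:
  assumes "even l" "1 \<le> c" "c < ar l"
  shows "\<exists>y. (\<forall>j<l. code y j = code x j) \<and> code y l = c"
proof -
  have "x \<in> nd x l" unfolding nd_def by simp
  hence "nodeG G (map (code x) [0..<l]) \<noteq> {}" using nd_node by auto
  hence "nodeG G (map (code x) [0..<l]) \<inter> G l c \<noteq> {}"
    using even_nonempty[OF _ assms(1) nd_node(2) _ assms(2,3)] levok_all by blast
  then obtain y where "y \<in> nd x l" "y \<in> G l c" using nd_node by auto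
  thus ?thesis unfolding nd_def using code_eq by blast
qed

lemma code_M: assumes "even l" "x \<in> MM (l div 2)" shows "code x l = 0"
proof (rule ccontr)
  assume "code x l \<noteq> 0"
  hence "G l (code x l) \<inter> MM (l div 2) = {}" using even_M[OF _ assms(1)] levok_all by simp
  thus False using code_in assms(2) by blast
qed

lemma code_odd: assumes "odd l" shows "code x l = 1 \<longleftrightarrow> x \<in> Sat (cylL (from_nat (l div 2)))"
  using G_eq[of l] assms unfolding code_iff by (simp add: fpart_def)

end

context S64 begin

definition mm :: "nat \<Rightarrow> nat" where "mm l = l div 2 + 1"

definition stp :: "nat \<Rightarrow> nat \<Rightarrow> real \<times> real \<Rightarrow> real \<times> real" where
  "stp l c ab = (if odd l then ab
     else if c = 0 then (fst ab, fst ab + (snd ab - fst ab) / 2)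
     else (if (c - 1) mod (mm l + 1) < (c - 1) div (mm l + 1) \<and> (c - 1) div (mm l + 1) \<le> mm l
           then (fst ab + (snd ab - fst ab) * real ((c - 1) mod (mm l + 1)) / real (mm l),
                 fst ab + (snd ab - fst ab) * real ((c - 1) div (mm l + 1)) / real (mm l))
           else ab))"

lemma stp_props:
  assumes "fst ab < snd ab"
  shows "fst ab \<le> fst (stp l c ab) \<and> fst (stp l c ab) < snd (stp l c ab) \<and> snd (stp l c ab) \<le> snd ab
         \<and> snd (stp l c ab) - fst (stp l c ab) \<le> snd ab - fst ab"
proof -
  define a b where "a = fst ab" "b = snd ab"
  define p r where "p = (c - 1) mod (mm l + 1)" "r = (c - 1) div (mm l + 1)"
  have ab: "a < b" using assms a_b_def by simp
  have m: "real (mm l) > 0" unfolding mm_def by simp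
  show ?thesis
  proof (cases "odd l \<or> c = 0 \<or> \<not> (p < r \<and> r \<le> mm l)")
    case True thus ?thesis unfolding stp_def using ab a_b_def p_r_def by (auto simp: field_simps)
  next
    case False
    hence st: "stp l c ab = (a + (b - a) * real p / real (mm l), a + (b - a) * real r / real (mm l))"
      unfolding stp_def a_b_def p_r_def by auto
    have pr: "p < r" "r \<le> mm l" using False by auto
    have "(b - a) * real p / real (mm l) \<ge> 0" using ab m by simp
    moreover have "(b - a) * real p / real (mm l) < (b - a) * real r / real (mm l)"
      using ab m pr(1) by (simp add: divide_strict_right_mono)
    moreover have "(b - a) * real r / real (mm l) \<le> (b - a)"
    proof -
      have "(b - a) * real r \<le> (b - a) * real (mm l)" using ab pr(2) by (intro mult_left_mono) auto
      thus ?thesis using m by (simp add: divide_le_eq)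
    qed
    ultimately show ?thesis unfolding st using a_b_def by auto
  qed
qed

primrec J :: "cantor \<Rightarrow> nat \<Rightarrow> real \<times> real" where
  "J x 0 = (0, 1)"
| "J x (Suc n) = stp n (code x n) (J x n)"

lemma J_lt: "fst (J x n) < snd (J x n)"
  by (induction n) (use stp_props in auto)

lemma J_mono1: "fst (J x n) \<le> fst (J x (Suc n))" and J_mono2: "snd (J x (Suc n)) \<le> snd (J x n)"
  and J_width: "snd (J x (Suc n)) - fst (J x (Suc n)) \<le> snd (J x n) - fst (J x n)"
  using stp_props[OF J_lt[of x n]] by auto

lemma J_inc: "m \<le> n \<Longrightarrow> fst (J x m) \<le> fst (J x n)"
proof (induction n)
  case (Suc n)
  show ?case
  proof (cases "m \<le> n")
    case True
    have "fst (J x m) \<le> fst (J x n)" using Suc True by blast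
    thus ?thesis using J_mono1[of x n] by linarith
  next
    case False hence "m = Suc n" using Suc by simp
    thus ?thesis by simp
  qed
qed simp
lemma J_dec: "m \<le> n \<Longrightarrow> snd (J x n) \<le> snd (J x m)"
proof (induction n)
  case (Suc n)
  show ?case
  proof (cases "m \<le> n")
    case True
    have "snd (J x n) \<le> snd (J x m)" using Suc True by blast
    thus ?thesis using J_mono2[of x n] by linarith
  next
    case False hence "m = Suc n" using Suc by simp
    thus ?thesis by simp
  qed
qed simp

lemma J_cross: "fst (J x m) \<le> snd (J x n)"
proof -
  have "fst (J x m) \<le> fst (J x (max m n))" by (rule J_inc) simp
  also have "\<dots> \<le> snd (J x (max m n))" using J_lt less_imp_le by blast
  also have "\<dots> \<le> snd (J x n)" by (rule J_dec) simp
  finally show ?thesis .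
qed

lemma J_01: "0 \<le> fst (J x n)" "snd (J x n) \<le> 1"
  using J_inc[of 0 n x] J_dec[of 0 n x] by auto

lemma J_code: "(\<forall>j<n. code y j = code x j) \<Longrightarrow> J y n = J x n"
  by (induction n) auto

definition phiL where "phiL x = (SUP n. fst (J x n))"
definition phiU where "phiU x = (INF n. snd (J x n))"

lemma bddA: "bdd_above (range (\<lambda>n. fst (J x n)))"
  by (rule bdd_aboveI[where M=1]) (use J_cross[of x _ 0] in auto)
lemma bddB: "bdd_below (range (\<lambda>n. snd (J x n)))"
  by (rule bdd_belowI[where m=0]) (use J_cross[of x 0] in auto)

lemma phiL_ge: "fst (J x n) \<le> phiL x"
  unfolding phiL_def using bddA by (rule cSUP_upper2) auto
lemma phiU_le: "phiU x \<le> snd (J x n)"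
  unfolding phiU_def using bddB by (rule cINF_lower2) auto
lemma phiL_le: "phiL x \<le> snd (J x n)"
  unfolding phiL_def by (rule cSUP_least) (auto simp: J_cross)
lemma phiLU: "phiL x \<le> phiU x"
  unfolding phiU_def by (rule cINF_greatest) (auto simp: phiL_le)
lemma phi01: "0 \<le> phiL x" "phiU x \<le> 1"
  using phiL_ge[of x 0] phiU_le[of x 0] by auto

lemma phi_code: assumes "\<forall>j. code y j = code x j" shows "phiL y = phiL x \<and> phiU y = phiU x"
proof -
  have "\<And>n. J y n = J x n" using J_code assms by blast
  thus ?thesis unfolding phiL_def phiU_def by simp
qed

lemma phi_h: "phiL (h x) = phiL x" "phiU (h x) = phiU x" using phi_code[of "h x" x] by auto

lemma J_const_open: "openin cantor_top {x. P (J x n)}"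
proof -
  have "\<forall>x\<in>{x. P (J x n)}. \<exists>T. openin cantor_top T \<and> x \<in> T \<and> T \<subseteq> {x. P (J x n)}"
  proof
    fix x assume x: "x \<in> {x. P (J x n)}"
    have "nd x n \<subseteq> {x. P (J x n)}"
    proof
      fix y assume "y \<in> nd x n"
      hence "J y n = J x n" using J_code unfolding nd_def by blast
      thus "y \<in> {x. P (J x n)}" using x by simp
    qed
    moreover have "x \<in> nd x n" unfolding nd_def by simp
    ultimately show "\<exists>T. openin cantor_top T \<and> x \<in> T \<and> T \<subseteq> {x. P (J x n)}"
      using uclo_open[OF nd_uclo] by blast
  qed
  thus ?thesis by (subst openin_subopen) blast
qed

lemma lsc: "lsc_on cantor_top phiL"
  unfolding lsc_on_def
proof
  fix a
  have "{x \<in> topspace cantor_top. a < phiL x} = (\<Union>n. {x. a < fst (J x n)})"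
    unfolding phiL_def using less_cSUP_iff[OF _ bddA] by auto
  moreover have "\<And>n. openin cantor_top {x. a < fst (J x n)}" using J_const_open[of "\<lambda>p. a < fst p"] by simp
  ultimately show "openin cantor_top {x \<in> topspace cantor_top. a < phiL x}"
    by (auto intro!: openin_Union)
qed

lemma usc: "usc_on cantor_top phiU"
  unfolding usc_on_def
proof
  fix a
  have "{x \<in> topspace cantor_top. phiU x < a} = (\<Union>n. {x. snd (J x n) < a})"
    unfolding phiU_def using cINF_less_iff[OF _ bddB] by auto
  moreover have "\<And>n. openin cantor_top {x. snd (J x n) < a}" using J_const_open[of "\<lambda>p. snd p < a"] by simp
  ultimately show "openin cantor_top {x \<in> topspace cantor_top. phiU x < a}"
    by (auto intro!: openin_Union)
qed

lemma admissible: "admissible phiL phiU"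
proof -
  have "\<forall>x. 0 \<le> phiL x \<and> phiL x \<le> 1 \<and> 0 \<le> phiU x \<and> phiU x \<le> 1"
  proof
    fix x show "0 \<le> phiL x \<and> phiL x \<le> 1 \<and> 0 \<le> phiU x \<and> phiU x \<le> 1"
      using phi01[of x] phiLU[of x] by linarith
  qed
  thus ?thesis unfolding admissible_def using lsc usc phiLU by blast
qed

lemma degenerate:
  assumes "x \<in> K k" shows "phiL x = phiU x"
proof (rule ccontr)
  assume "phiL x \<noteq> phiU x"
  hence pos: "phiU x - phiL x > 0" using phiLU[of x] by simp
  define w where "w n = snd (J x n) - fst (J x n)" for n
  have w1: "w (Suc n) \<le> w n" for n unfolding w_def using J_width by blast
  have half: "w (Suc (2 * i)) = w (2 * i) / 2" if "i \<ge> k" for i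
  proof -
    have "x \<in> MM i" unfolding MM_def using assms that by auto
    hence "code x (2 * i) = 0" using code_M[of "2*i" x] by simp
    hence "J x (Suc (2*i)) = (fst (J x (2*i)), fst (J x (2*i)) + (snd (J x (2*i)) - fst (J x (2*i))) / 2)"
      by (simp add: stp_def)
    thus ?thesis unfolding w_def by simp
  qed
  have bound: "w (2 * (k + j)) \<le> (1/2)^j" for j
  proof (induction j)
    case 0 thus ?case unfolding w_def using J_01[of x "2*k"] J_lt[of x "2*k"] by simp
  next
    case (Suc j)
    have "w (2 * (k + Suc j)) \<le> w (Suc (2 * (k + j)))"
      using w1[of "Suc (2 * (k + j))"] by simp
    also have "\<dots> = w (2 * (k + j)) / 2" using half[of "k + j"] by simp
    also have "\<dots> \<le> (1/2)^Suc j" using Suc by simp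
    finally show ?case .
  qed
  obtain j where j: "(1/2::real)^j < phiU x - phiL x" using real_arch_pow_inv[OF pos, of "1/2"] by auto
  have "phiU x - phiL x \<le> w (2 * (k + j))"
    unfolding w_def using phiU_le[of x "2*(k+j)"] phiL_ge[of x "2*(k+j)"] by linarith
  thus False using bound[of j] j by simp
qed

end

context S64 begin

primrec Pseq :: "nat \<Rightarrow> (nat \<Rightarrow> nat) \<Rightarrow> cantor \<Rightarrow> nat \<Rightarrow> cantor" where
  "Pseq n R x 0 = x"
| "Pseq n R x (Suc k) = (SOME y. (\<forall>j<n+k. code y j = code (Pseq n R x k) j) \<and>
      code y (n+k) = (if even (n+k) then R (n+k) else code (Pseq n R x k) (n+k)))"

lemma realize:
  assumes R: "\<forall>j\<ge>n. even j \<longrightarrow> 1 \<le> R j \<and> R j < ar j"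
  shows "\<exists>y. (\<forall>j<n. code y j = code x j) \<and> (\<forall>j\<ge>n. even j \<longrightarrow> code y j = R j)"
proof -
  define P where "P = Pseq n R x"
  have nxt: "(\<forall>j<n+k. code (P (Suc k)) j = code (P k) j) \<and>
      code (P (Suc k)) (n+k) = (if even (n+k) then R (n+k) else code (P k) (n+k))" for k
  proof -
    have "\<exists>y. (\<forall>j<n+k. code y j = code (P k) j) \<and>
      code y (n+k) = (if even (n+k) then R (n+k) else code (P k) (n+k))"
    proof (cases "even (n+k)")
      case True
      have "1 \<le> R (n+k)" "R (n+k) < ar (n+k)" using R True by auto
      thus ?thesis using extend[OF True, of "R (n+k)" "P k"] True by auto
    next
      case False thus ?thesis by auto
    qed
    thus ?thesis unfolding P_def Pseq.simps by (rule someI_ex)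
  qed
  define C where "C k = nd (P k) (n + k)" for k
  have Ccl: "closedin mtopology (C k)" for k unfolding C_def mtop using uclo_closed[OF nd_uclo] .
  have Cne: "C k \<noteq> {}" for k unfolding C_def nd_def by auto
  have Cdec: "decseq C"
  proof (rule decseq_SucI)
    fix k show "C (Suc k) \<subseteq> C k"
    proof
      fix y assume "y \<in> C (Suc k)"
      hence "\<forall>j<n + Suc k. code y j = code (P (Suc k)) j" unfolding C_def nd_def by simp
      thus "y \<in> C k" unfolding C_def nd_def using nxt[of k] by auto
    qed
  qed
  have cs: "compact_space mtopology" using compact_cantor mtop by simp
  have "\<Inter>(range C) \<noteq> {}"
    using compact_space_nest[THEN iffD1, OF cs] Ccl Cne Cdec by blast
  then obtain y where y: "\<And>k. y \<in> C k" by blast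
  have "\<forall>j<n. code y j = code x j" using y[of 0] unfolding C_def nd_def P_def by simp
  moreover have "\<forall>j\<ge>n. even j \<longrightarrow> code y j = R j"
  proof (intro allI impI)
    fix j assume j: "n \<le> j" "even j"
    define k where "k = j - n"
    have jk: "j = n + k" using j unfolding k_def by simp
    have "code y j = code (P (Suc k)) j" using y[of "Suc k"] unfolding C_def nd_def jk by simp
    also have "\<dots> = R j" using nxt[of k] j(2) unfolding jk by simp
    finally show "code y j = R j" .
  qed
  ultimately show ?thesis by blast
qed

lemma grid:
  fixes a b s t :: real and m :: nat
  assumes ab: "a < b" and as: "a \<le> s" and st: "s \<le> t" and tb: "t \<le> b" and m: "m \<ge> 1"
  shows "\<exists>p r. p < r \<and> r \<le> m \<and> \<bar>a + (b-a) * real p / real m - s\<bar> \<le> (b-a) / real m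
                 \<and> \<bar>a + (b-a) * real r / real m - t\<bar> \<le> (b-a) / real m"
proof -
  define L where "L = b - a"
  have L: "L > 0" using ab L_def by simp
  have mr: "real m > 0" using m by simp
  define u where "u = (s - a) * real m / L"
  define v where "v = (t - a) * real m / L"
  have u0: "0 \<le> u" unfolding u_def using as L mr by simp
  have uv: "u \<le> v" unfolding u_def v_def using st L mr by (intro divide_right_mono mult_right_mono) auto
  have vm: "v \<le> real m"
  proof -
    have "(t - a) * real m \<le> L * real m" using tb mr unfolding L_def by (intro mult_right_mono) auto
    thus ?thesis unfolding v_def using L by (simp add: divide_le_eq mult.commute)
  qed
  have s_eq: "s = a + L * u / real m" unfolding u_def using L mr by (simp add: field_simps)
  have t_eq: "t = a + L * v / real m" unfolding v_def using L mr by (simp add: field_simps)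
  obtain p :: nat where p: "p < m" "real p \<le> u" "u \<le> real p + 1"
  proof (cases "u < real m")
    case True
    define p where "p = nat \<lfloor>u\<rfloor>"
    have rp: "real p = of_int \<lfloor>u\<rfloor>" unfolding p_def using u0 by simp
    have "real p \<le> u" "u \<le> real p + 1" unfolding rp by linarith+
    moreover have "real p < real m" using \<open>real p \<le> u\<close> True by linarith
    ultimately show ?thesis using that by simp
  next
    case False
    hence um: "u = real m" using uv vm by simp
    show ?thesis using that[of "m - 1"] m um by (simp add: of_nat_diff)
  qed
  define r where "r = max (Suc p) (nat \<lceil>v\<rceil>)"
  have rv: "p < r" "v \<le> real r \<and> real r \<le> v + 1" "r \<le> m"
  proof -
    have cv: "real (nat \<lceil>v\<rceil>) = of_int \<lceil>v\<rceil>" using u0 uv by simp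
    have c1: "v \<le> of_int \<lceil>v\<rceil>" "of_int \<lceil>v\<rceil> < v + 1" by linarith+
    have c2i: "\<lceil>v\<rceil> \<le> int m" using vm by (simp add: ceiling_le_iff)
    have c2: "of_int \<lceil>v\<rceil> \<le> real m" using of_int_le_iff[of "\<lceil>v\<rceil>" "int m", where 'a=real] c2i by simp
    show "p < r" unfolding r_def by simp
    show "v \<le> real r \<and> real r \<le> v + 1"
    proof (cases "Suc p \<le> nat \<lceil>v\<rceil>")
      case True
      hence "real r = of_int \<lceil>v\<rceil>" unfolding r_def using cv by simp
      thus ?thesis using c1 by simp
    next
      case False
      hence rr: "r = Suc p" unfolding r_def by simp
      have "nat \<lceil>v\<rceil> \<le> p" using False by (simp only: not_less_eq_eq)
      hence "real (nat \<lceil>v\<rceil>) \<le> real p" by (rule of_nat_mono)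
      hence "v \<le> real p + 1" "real p + 1 \<le> v + 1" using c1 cv p(2) uv by linarith+
      thus ?thesis unfolding rr by simp
    qed
    have "nat \<lceil>v\<rceil> \<le> m" using c2i by (simp only: nat_le_iff)
    thus "r \<le> m" unfolding r_def using p(1) by simp
  qed
  have e1: "a + (b-a) * real p / real m - s = (L / real m) * (real p - u)"
    unfolding s_eq L_def using mr by (simp add: field_simps)
  have e2: "a + (b-a) * real r / real m - t = (L / real m) * (real r - v)"
    unfolding t_eq L_def using mr by (simp add: field_simps)
  have pos: "L / real m > 0" using L mr by simp
  have "\<bar>a + (b-a) * real p / real m - s\<bar> = (L / real m) * \<bar>real p - u\<bar>"
    by (simp only: e1 abs_mult abs_of_pos[OF pos])
  also have "\<dots> \<le> (L / real m) * 1" using p pos by (intro mult_left_mono) auto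
  finally have A: "\<bar>a + (b-a) * real p / real m - s\<bar> \<le> (b-a) / real m" unfolding L_def by simp
  have "\<bar>a + (b-a) * real r / real m - t\<bar> = (L / real m) * \<bar>real r - v\<bar>"
    by (simp only: e2 abs_mult abs_of_pos[OF pos])
  also have "\<dots> \<le> (L / real m) * 1" using rv pos by (intro mult_left_mono) auto
  finally have B: "\<bar>a + (b-a) * real r / real m - t\<bar> \<le> (b-a) / real m" unfolding L_def by simp
  show ?thesis using A B rv by blast
qed

lemma ar_even_ge: "even j \<Longrightarrow> ar j \<ge> 5"
proof -
  assume "even j"
  have "(2::nat)^2 \<le> (j div 2 + 2)^2" by (intro power_mono) auto
  thus "ar j \<ge> 5" unfolding ar_def using \<open>even j\<close> by simp
qed

lemma keep_stp: assumes "c = 1 \<or> c = 2" shows "stp l c ab = ab"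
proof -
  have "mm l + 1 \<ge> 2" unfolding mm_def by simp
  hence "\<not> ((c - 1) mod (mm l + 1) < (c - 1) div (mm l + 1))" using assms by auto
  thus ?thesis unfolding stp_def using assms by auto
qed

lemma tail_const:
  assumes "\<forall>j\<ge>n0. even j \<longrightarrow> code y j = 1 \<or> code y j = 2" "n \<ge> n0"
  shows "J y n = J y n0"
  using assms(2)
proof (induction n)
  case (Suc n)
  show ?case
  proof (cases "n0 \<le> n")
    case True
    have "stp n (code y n) (J y n) = J y n"
    proof (cases "even n")
      case True thus ?thesis using assms(1) \<open>n0 \<le> n\<close> keep_stp by blast
    next
      case False thus ?thesis unfolding stp_def by simp
    qed
    thus ?thesis using Suc True by simp
  next
    case False hence "n0 = Suc n" using Suc by simp
    thus ?thesis by simp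
  qed
qed simp

lemma tail_phi:
  assumes "\<forall>j\<ge>n0. even j \<longrightarrow> code y j = 1 \<or> code y j = 2"
  shows "phiL y = fst (J y n0)" "phiU y = snd (J y n0)"
proof -
  have le: "fst (J y n) \<le> fst (J y n0)" for n
  proof (cases "n \<le> n0")
    case True thus ?thesis by (rule J_inc)
  next
    case False thus ?thesis using tail_const[OF assms, of n] by simp
  qed
  have "phiL y \<le> fst (J y n0)" unfolding phiL_def by (rule cSUP_least) (auto simp: le)
  thus "phiL y = fst (J y n0)" using phiL_ge[of y n0] by simp
  have ge: "snd (J y n0) \<le> snd (J y n)" for n
  proof (cases "n \<le> n0")
    case True thus ?thesis by (rule J_dec)
  next
    case False thus ?thesis using tail_const[OF assms, of n] by simp
  qed
  have "snd (J y n0) \<le> phiU y" unfolding phiU_def by (rule cINF_greatest) (auto simp: ge)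
  thus "phiU y = snd (J y n0)" using phiU_le[of y n0] by simp
qed

end

context S64 begin

lemma approx:
  assumes sx: "phiL x \<le> s" and st: "s \<le> t" and tx: "t \<le> phiU x" and e: "e > 0"
  shows "\<exists>z. z \<noteq> x \<and> d x z < e \<and> phiL z < phiU z \<and> \<bar>phiL z - s\<bar> \<le> e \<and> \<bar>phiU z - t\<bar> \<le> e"
proof -
  obtain N where N: "\<forall>a b. agree N a b \<longrightarrow> d a b < e" using fine e by blast
  define bs where "bs = map x [0..<N]"
  define k0 where "k0 = to_nat bs"
  define lf where "lf = 2 * k0 + 1"
  have lf: "odd lf" "lf div 2 = k0" unfolding lf_def by auto
  have fk: "from_nat k0 = bs" unfolding k0_def by simp
  have xc: "x \<in> cylL bs" unfolding cylL_def bs_def by simp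
  have codex: "code x lf = 1" using code_odd[OF lf(1)] Sat_sub xc unfolding lf(2) fk by blast
  obtain n0 :: nat where n0: "n0 > 0" "inverse (real n0) < e" using ex_inverse_of_nat_less[OF e] by auto
  define i where "i = k0 + n0"
  have ik: "i > k0" unfolding i_def using n0 by simp
  define l0 where "l0 = 2 * i"
  have l0: "even l0" "lf < l0" unfolding l0_def lf_def using ik by auto
  define m where "m = mm l0"
  have m: "m = i + 1" "m \<ge> 1" unfolding m_def mm_def l0_def by auto
  have me: "1 / real m < e"
  proof -
    have "1 / real m \<le> inverse (real n0)" unfolding m i_def using n0(1) by (simp add: divide_simps)
    thus ?thesis using n0(2) by linarith
  qed
  define a b where "a = fst (J x l0)" "b = snd (J x l0)"
  have ab: "a < b" "a \<le> s" "t \<le> b" "0 \<le> a" "b \<le> 1"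
    using J_lt[of x l0] phiL_ge[of x l0] phiU_le[of x l0] sx tx J_01[of x l0] unfolding a_b_def by auto
  obtain p r where pr: "p < r" "r \<le> m" "\<bar>a + (b-a) * real p / real m - s\<bar> \<le> (b-a) / real m"
      "\<bar>a + (b-a) * real r / real m - t\<bar> \<le> (b-a) / real m"
    using grid[OF ab(1,2) st ab(3) m(2)] by blast
  have err: "(b - a) / real m \<le> 1 / real m" using ab m(2) by (simp add: divide_right_mono)
  define c0 where "c0 = 1 + p + (m + 1) * r"
  have c0pos: "1 \<le> c0" unfolding c0_def by simp
  have c0ar: "c0 < ar l0"
  proof -
    have "(m + 1) * r \<le> (m + 1) * m" using pr(2) by (rule mult_le_mono2)
    hence "c0 \<le> 1 + m + (m + 1) * m" unfolding c0_def using pr by linarith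
    moreover have "ar l0 = Suc ((m + 1)^2)" unfolding ar_def m(1) l0_def by simp
    ultimately show ?thesis by (simp add: power2_eq_square algebra_simps)
  qed
  have pm: "p < m + 1" using pr by linarith
  have c0e: "c0 - 1 = p + (m+1) * r" unfolding c0_def by simp
  have d1: "(p + (m+1)*r) div (m+1) = r + p div (m+1)" by (rule div_mult_self2) simp
  have d2: "p div (m+1) = 0" using pm by (rule div_less)
  have d3: "(p + (m+1)*r) mod (m+1) = p mod (m+1)" by (rule mod_mult_self2)
  have d4: "p mod (m+1) = p" using pm by (rule mod_less)
  have dec: "(c0 - 1) mod (m + 1) = p" "(c0 - 1) div (m + 1) = r"
    unfolding c0e using d1 d2 d3 d4 by simp_all
  define a' b' where "a' = a + (b-a) * real p / real m" "b' = a + (b-a) * real r / real m"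
  have stp0: "stp l0 c0 (J x l0) = (a', b')"
    unfolding stp_def using l0(1) c0pos dec pr unfolding a'_b'_def a_b_def m_def by auto
  define R1 where "R1 j = (if j = l0 then c0 else 1)" for j
  define R2 where "R2 j = (if j = l0 then c0 else if j = l0 + 2 then 2 else 1)" for j
  have R1ok: "\<forall>j\<ge>l0. even j \<longrightarrow> 1 \<le> R1 j \<and> R1 j < ar j"
    unfolding R1_def using c0pos c0ar ar_even_ge by fastforce
  have R2ok: "\<forall>j\<ge>l0. even j \<longrightarrow> 1 \<le> R2 j \<and> R2 j < ar j"
    unfolding R2_def using c0pos c0ar ar_even_ge by fastforce
  obtain y1 where y1: "\<forall>j<l0. code y1 j = code x j" "\<forall>j\<ge>l0. even j \<longrightarrow> code y1 j = R1 j"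
    using realize[OF R1ok] by blast
  obtain y2 where y2: "\<forall>j<l0. code y2 j = code x j" "\<forall>j\<ge>l0. even j \<longrightarrow> code y2 j = R2 j"
    using realize[OF R2ok] by blast
  have good: "\<exists>y. (\<forall>j<l0. code y j = code x j) \<and> code y l0 = c0
      \<and> (\<forall>j\<ge>Suc l0. even j \<longrightarrow> code y j = 1 \<or> code y j = 2) \<and> code y (l0 + 2) \<noteq> code x (l0 + 2)"
  proof (cases "code x (l0 + 2) = 1")
    case True
    have "code y2 (l0 + 2) = 2" using y2(2) l0(1) unfolding R2_def by simp
    moreover have "code y2 l0 = c0" using y2(2) l0(1) unfolding R2_def by simp
    moreover have "\<forall>j\<ge>Suc l0. even j \<longrightarrow> code y2 j = 1 \<or> code y2 j = 2"
      using y2(2) unfolding R2_def by auto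
    ultimately show ?thesis using y2(1) True by (intro exI[of _ y2]) auto
  next
    case False
    have "code y1 (l0 + 2) = 1" using y1(2) l0(1) unfolding R1_def by simp
    moreover have "code y1 l0 = c0" using y1(2) l0(1) unfolding R1_def by simp
    moreover have "\<forall>j\<ge>Suc l0. even j \<longrightarrow> code y1 j = 1 \<or> code y1 j = 2"
      using y1(2) unfolding R1_def by auto
    ultimately show ?thesis using y1(1) False by (intro exI[of _ y1]) auto
  qed
  then obtain y where y: "\<forall>j<l0. code y j = code x j" "code y l0 = c0"
      "\<forall>j\<ge>Suc l0. even j \<longrightarrow> code y j = 1 \<or> code y j = 2" "code y (l0 + 2) \<noteq> code x (l0 + 2)"
    by blast
  have Jy: "J y l0 = J x l0" using J_code y(1) by blast
  have Jy1: "J y (Suc l0) = (a', b')" using Jy y(2) stp0 by simp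
  have phy: "phiL y = a'" "phiU y = b'" using tail_phi[OF y(3)] Jy1 by auto
  have "code y lf = 1" using y(1) l0(2) codex by simp
  hence "y \<in> Sat (cylL bs)" using code_odd[OF lf(1)] unfolding lf(2) fk by blast
  then obtain q where q: "(h^^q) y \<in> cylL bs \<or> (hi^^q) y \<in> cylL bs" unfolding Sat_def by blast
  then obtain z where z: "z \<in> cylL bs" "\<forall>j. code z j = code y j"
    by (metis code_hn code_hin)
  have "agree N x z" using z(1) unfolding cylL_def bs_def agree_def by simp
  hence dz: "d x z < e" using N by blast
  have phz: "phiL z = a'" "phiU z = b'" using phi_code[OF z(2)] phy by auto
  have zx: "z \<noteq> x" using z(2) y(4) by metis
  have "a' < b'"
  proof -
    have "(b - a) * real p / real m < (b - a) * real r / real m"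
      using ab(1) m(2) pr(1) by (simp add: divide_strict_right_mono)
    thus ?thesis unfolding a'_b'_def by simp
  qed
  moreover have "\<bar>a' - s\<bar> \<le> e" "\<bar>b' - t\<bar> \<le> e"
    using pr(3,4) err me unfolding a'_b'_def by linarith+
  ultimately show ?thesis using zx dz phz by metis
qed

end

lemma hd_bound:
  fixes a b s t :: real
  assumes "a \<le> b" "s \<le> t"
  shows "0 \<le> hausdist {a..b} {s..t} \<and> hausdist {a..b} {s..t} \<le> max \<bar>a - s\<bar> \<bar>b - t\<bar>"
proof -
  define D where "D = max \<bar>a - s\<bar> \<bar>b - t\<bar>"
  have h1: "infdist u {s..t} \<le> D" if "u \<in> {a..b}" for u
  proof (cases "u < s")
    case True
    have "infdist u {s..t} \<le> dist u s" using assms by (intro infdist_le) auto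
    thus ?thesis using True that unfolding D_def dist_real_def by auto
  next
    case False
    show ?thesis
    proof (cases "u > t")
      case True
      have "infdist u {s..t} \<le> dist u t" using assms by (intro infdist_le) auto
      thus ?thesis using True that unfolding D_def dist_real_def by auto
    next
      case False
      hence "u \<in> {s..t}" using \<open>\<not> u < s\<close> by auto
      thus ?thesis unfolding D_def by simp
    qed
  qed
  have h2: "infdist u {a..b} \<le> D" if "u \<in> {s..t}" for u
  proof (cases "u < a")
    case True
    have "infdist u {a..b} \<le> dist u a" using assms by (intro infdist_le) auto
    thus ?thesis using True that unfolding D_def dist_real_def by auto
  next
    case False
    show ?thesis
    proof (cases "u > b")
      case True
      have "infdist u {a..b} \<le> dist u b" using assms by (intro infdist_le) auto
      thus ?thesis using True that unfolding D_def dist_real_def by auto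
    next
      case False
      hence "u \<in> {a..b}" using \<open>\<not> u < a\<close> by auto
      thus ?thesis unfolding D_def by simp
    qed
  qed
  have ne1: "{a..b} \<noteq> {}" and ne2: "{s..t} \<noteq> {}" using assms by auto
  have S1: "(SUP u\<in>{a..b}. infdist u {s..t}) \<le> D" using h1 ne1 by (intro cSUP_least) auto
  have S2: "(SUP u\<in>{s..t}. infdist u {a..b}) \<le> D" using h2 ne2 by (intro cSUP_least) auto
  have "bdd_above ((\<lambda>u. infdist u {s..t}) ` {a..b})" using h1 by (intro bdd_aboveI[where M=D]) auto
  hence P1: "0 \<le> (SUP u\<in>{a..b}. infdist u {s..t})"
    using assms(1) by (intro cSUP_upper2[where x=a]) (auto simp: infdist_nonneg)
  show ?thesis unfolding hausdist_def D_def[symmetric] using S1 S2 P1 by simp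
qed

context S64 begin

lemma fiber_eq: "fence_fiber phiL phiU x = {phiL x..phiU x}"
  unfolding fence_fiber_def fence_def using phi01[of x] by auto

lemma fraisse: "fraisse_fence phiL phiU"
  unfolding fraisse_fence_def
proof (intro allI impI)
  fix x I assume a: "continuum I \<and> I \<subseteq> fence_fiber phiL phiU x"
  obtain s t where I: "I = {s..t}" using a connected_compact_interval_1 unfolding continuum_def by blast
  have st: "s \<le> t" using a I unfolding continuum_def by auto
  have sx: "phiL x \<le> s" "t \<le> phiU x" using a st unfolding I fiber_eq by auto
  have "\<forall>k. \<exists>z. z \<noteq> x \<and> d x z < inverse (real (Suc k)) \<and> phiL z < phiU z \<and>
           \<bar>phiL z - s\<bar> \<le> inverse (real (Suc k)) \<and> \<bar>phiU z - t\<bar> \<le> inverse (real (Suc k))"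
    using approx[OF sx(1) st sx(2)] by simp
  then obtain xs where xs: "\<And>k. xs k \<noteq> x \<and> d x (xs k) < inverse (real (Suc k)) \<and> phiL (xs k) < phiU (xs k) \<and>
           \<bar>phiL (xs k) - s\<bar> \<le> inverse (real (Suc k)) \<and> \<bar>phiU (xs k) - t\<bar> \<le> inverse (real (Suc k))"
    by metis
  have lim: "limitin cantor_top xs x sequentially"
    unfolding mtop[symmetric] limitin_metric
  proof (intro conjI allI impI)
    fix \<epsilon> :: real assume "\<epsilon> > 0"
    then obtain n where n: "n > 0" "inverse (real n) < \<epsilon>" using ex_inverse_of_nat_less by blast
    have "\<forall>k\<ge>n. xs k \<in> UNIV \<and> d (xs k) x < \<epsilon>"
    proof (intro allI impI conjI)
      fix k assume "k \<ge> n"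
      hence "inverse (real (Suc k)) \<le> inverse (real n)" using n(1) by (simp add: le_imp_inverse_le)
      thus "d (xs k) x < \<epsilon>" using xs[of k] n(2) commute[of x "xs k"] by linarith
    qed simp
    thus "\<forall>\<^sub>F k in sequentially. xs k \<in> UNIV \<and> d (xs k) x < \<epsilon>"
      unfolding eventually_sequentially by blast
  qed simp
  have arc: "nondegenerate_arc (fence_fiber phiL phiU (xs k))" for k
  proof -
    have "phiL (xs k) \<noteq> phiU (xs k)" using xs[of k] by simp
    hence "arc (linepath (phiL (xs k)) (phiU (xs k)))" by simp
    moreover have "path_image (linepath (phiL (xs k)) (phiU (xs k))) = fence_fiber phiL phiU (xs k)"
      unfolding fiber_eq using xs[of k] by (simp add: closed_segment_eq_real_ivl)
    ultimately show ?thesis unfolding nondegenerate_arc_def by blast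
  qed
  have hd: "0 \<le> hausdist (fence_fiber phiL phiU (xs k)) I \<and>
            hausdist (fence_fiber phiL phiU (xs k)) I \<le> inverse (real (Suc k))" for k
  proof -
    have "0 \<le> hausdist {phiL (xs k)..phiU (xs k)} {s..t} \<and>
          hausdist {phiL (xs k)..phiU (xs k)} {s..t} \<le> max \<bar>phiL (xs k) - s\<bar> \<bar>phiU (xs k) - t\<bar>"
      using xs[of k] st by (intro hd_bound) auto
    thus ?thesis unfolding fiber_eq I using xs[of k] by auto
  qed
  have "(\<lambda>k. hausdist (fence_fiber phiL phiU (xs k)) I) \<longlonglongrightarrow> 0"
    using hd by (intro tendsto_sandwich[OF _ _ tendsto_const LIMSEQ_inverse_real_of_nat]) auto
  thus "\<exists>xs. (\<forall>k. xs k \<noteq> x) \<and> limitin cantor_top xs x sequentially \<and>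
          (\<forall>k. nondegenerate_arc (fence_fiber phiL phiU (xs k))) \<and>
          (\<lambda>k. hausdist (fence_fiber phiL phiU (xs k)) I) \<longlonglongrightarrow> 0"
    using xs lim arc by blast
qed

lemma ms_md: "Metric_space S (max_dist d)"
proof
  fix x y z :: "cantor \<times> real"
  show "0 \<le> max_dist d x y" unfolding max_dist_def by simp
  show "max_dist d x y = max_dist d y x" unfolding max_dist_def by (simp add: commute abs_minus_commute)
  show "max_dist d x y = 0 \<longleftrightarrow> x = y" if "x \<in> S" "y \<in> S"
  proof -
    have z: "d (fst x) (fst y) = 0 \<longleftrightarrow> fst x = fst y" using zero[of "fst x" "fst y"] by simp
    have mx: "max A B = 0 \<longleftrightarrow> A = 0 \<and> B = 0" if "0 \<le> A" "0 \<le> B" for A B :: real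
      using that by (auto simp: max_def)
    have "max (d (fst x) (fst y)) \<bar>snd x - snd y\<bar> = 0 \<longleftrightarrow> d (fst x) (fst y) = 0 \<and> \<bar>snd x - snd y\<bar> = 0"
      by (rule mx) auto
    also have "\<dots> \<longleftrightarrow> x = y" by (simp only: z prod_eq_iff) simp
    finally show ?thesis unfolding max_dist_def .
  qed
  show "max_dist d x z \<le> max_dist d x y + max_dist d y z" if "x \<in> S" "y \<in> S" "z \<in> S"
  proof -
    have "d (fst x) (fst z) \<le> d (fst x) (fst y) + d (fst y) (fst z)" by (rule triangle) auto
    moreover have "\<bar>snd x - snd z\<bar> \<le> \<bar>snd x - snd y\<bar> + \<bar>snd y - snd z\<bar>" by linarith
    ultimately show ?thesis unfolding max_dist_def by linarith
  qed
qed

definition hh :: "cantor \<times> real \<Rightarrow> cantor \<times> real" where "hh p = (h (fst p), snd p)"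
definition hhi :: "cantor \<times> real \<Rightarrow> cantor \<times> real" where "hhi p = (hi (fst p), snd p)"

lemma fence_h: "p \<in> fence phiL phiU \<Longrightarrow> hh p \<in> fence phiL phiU"
  unfolding hh_def fence_def by (auto simp: phi_h)

lemma fence_hi: "p \<in> fence phiL phiU \<Longrightarrow> hhi p \<in> fence phiL phiU"
proof -
  assume "p \<in> fence phiL phiU"
  moreover have "phiL (hi (fst p)) = phiL (fst p)" "phiU (hi (fst p)) = phiU (fst p)"
    using phi_h[of "hi (fst p)"] by auto
  ultimately show ?thesis unfolding hhi_def fence_def by auto
qed

lemma hh_iso: "max_dist d (hh p) (hh q) = max_dist d p q"
  unfolding hh_def max_dist_def by (simp add: iso)
lemma hhi_iso: "max_dist d (hhi p) (hhi q) = max_dist d p q"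
  unfolding hhi_def max_dist_def by (simp add: iso_hi)

lemma cont_iso:
  assumes "\<And>p. p \<in> fence phiL phiU \<Longrightarrow> f p \<in> fence phiL phiU"
    and "\<And>p q. max_dist d (f p) (f q) = max_dist d p q"
  shows "continuous_map (fence_top d phiL phiU) (fence_top d phiL phiU) f"
  unfolding fence_top_def
  using assms by (subst Metric_space.metric_continuous_map[OF ms_md ms_md]) auto

lemma main:
  "\<exists>phiL phiU hh. admissible phiL phiU \<and> fraisse_fence phiL phiU \<and>
     homeomorphic_map (fence_top d phiL phiU) (fence_top d phiL phiU) hh \<and>
     (\<forall>p\<in>fence phiL phiU. \<forall>q\<in>fence phiL phiU. max_dist d (hh p) (hh q) = max_dist d p q) \<and>
     is_factor (fence_top d phiL phiU) hh h \<and>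
     (\<forall>x \<in> (\<Union>n. K n). phiL x = phiU x)"
proof (intro exI conjI)
  show "admissible phiL phiU" by (rule admissible)
  show "fraisse_fence phiL phiU" by (rule fraisse)
  have top: "topspace (fence_top d phiL phiU) = fence phiL phiU"
    unfolding fence_top_def using Metric_space.topspace_mtopology[OF ms_md] by blast
  have c1: "continuous_map (fence_top d phiL phiU) (fence_top d phiL phiU) hh"
    by (rule cont_iso) (auto intro: fence_h hh_iso)
  have c2: "continuous_map (fence_top d phiL phiU) (fence_top d phiL phiU) hhi"
    by (rule cont_iso) (auto intro: fence_hi hhi_iso)
  have "homeomorphic_maps (fence_top d phiL phiU) (fence_top d phiL phiU) hh hhi"
    unfolding homeomorphic_maps_def top using c1 c2
    by (auto simp: hh_def hhi_def)
  thus "homeomorphic_map (fence_top d phiL phiU) (fence_top d phiL phiU) hh"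
    by (rule homeomorphic_maps_imp_map)
  show "\<forall>p\<in>fence phiL phiU. \<forall>q\<in>fence phiL phiU. max_dist d (hh p) (hh q) = max_dist d p q"
    using hh_iso by blast
  have cfst: "continuous_map (fence_top d phiL phiU) cantor_top fst"
    unfolding fence_top_def mtop[symmetric]
  proof (subst Metric_space.metric_continuous_map[OF ms_md Metric_space_axioms], intro conjI ballI allI impI)
    fix a and \<epsilon> :: real assume "\<epsilon> > 0"
    thus "\<exists>\<delta>>0. \<forall>x. x \<in> fence phiL phiU \<and> max_dist d a x < \<delta> \<longrightarrow> d (fst a) (fst x) < \<epsilon>"
      unfolding max_dist_def by (intro exI[of _ \<epsilon>]) auto
  qed simp
  have sfst: "fst ` topspace (fence_top d phiL phiU) = UNIV"
  proof -
    have "(x, phiL x) \<in> fence phiL phiU" for x unfolding fence_def using phi01[of x] phiLU[of x] by auto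
    hence "x \<in> fst ` fence phiL phiU" for x by (rule image_eqI[rotated]) simp
    thus ?thesis unfolding top by blast
  qed
  show "is_factor (fence_top d phiL phiU) hh h"
    unfolding is_factor_def using cfst sfst by (intro exI[of _ fst]) (auto simp: hh_def)
  show "\<forall>x \<in> (\<Union>n. K n). phiL x = phiU x" using degenerate by blast
qed

end

theorem theorem6p4:
  fixes d :: "cantor \<Rightarrow> cantor \<Rightarrow> real" and h :: "cantor \<Rightarrow> cantor"
  assumes "compatible_metric d"
    and "homeomorphic_map cantor_top cantor_top h"
    and "\<forall>x y. d (h x) (h y) = d x y"
    and "\<forall>x. nowhere_dense_in cantor_top (orb x h)"
  shows "(\<exists>phiL phiU hh. admissible phiL phiU \<and> fraisse_fence phiL phiU \<and>
            homeomorphic_map (fence_top d phiL phiU) (fence_top d phiL phiU) hh \<and>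
            (\<forall>p\<in>fence phiL phiU. \<forall>q\<in>fence phiL phiU. max_dist d (hh p) (hh q) = max_dist d p q) \<and>
            is_factor (fence_top d phiL phiU) hh h)
       \<and> (\<forall>K :: nat \<Rightarrow> cantor set.
            (\<forall>n. closedin cantor_top (K n) \<and> h ` K n \<subseteq> K n \<and> nowhere_dense_in cantor_top (K n)) \<longrightarrow>
            (\<exists>phiL phiU hh. admissible phiL phiU \<and> fraisse_fence phiL phiU \<and>
              homeomorphic_map (fence_top d phiL phiU) (fence_top d phiL phiU) hh \<and>
              (\<forall>p\<in>fence phiL phiU. \<forall>q\<in>fence phiL phiU. max_dist d (hh p) (hh q) = max_dist d p q) \<and>
              is_factor (fence_top d phiL phiU) hh h \<and>
              (\<forall>x \<in> (\<Union>n. K n). phiL x = phiU x)))"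
proof -
  have ms: "Metric_space UNIV d" and mt: "Metric_space.mtopology UNIV d = cantor_top"
    using assms(1) unfolding compatible_metric_def by auto
  have loc: "S64 d h K" if "\<forall>n. closedin cantor_top (K n) \<and> h ` K n \<subseteq> K n \<and> nowhere_dense_in cantor_top (K n)" for K
    unfolding S64_def S64_axioms_def using ms mt assms(2-4) that by blast
  have part2: "\<forall>K :: nat \<Rightarrow> cantor set.
            (\<forall>n. closedin cantor_top (K n) \<and> h ` K n \<subseteq> K n \<and> nowhere_dense_in cantor_top (K n)) \<longrightarrow>
            (\<exists>phiL phiU hh. admissible phiL phiU \<and> fraisse_fence phiL phiU \<and>
              homeomorphic_map (fence_top d phiL phiU) (fence_top d phiL phiU) hh \<and>
              (\<forall>p\<in>fence phiL phiU. \<forall>q\<in>fence phiL phiU. max_dist d (hh p) (hh q) = max_dist d p q) \<and>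
              is_factor (fence_top d phiL phiU) hh h \<and>
              (\<forall>x \<in> (\<Union>n. K n). phiL x = phiU x))"
  proof (intro allI impI)
    fix K :: "nat \<Rightarrow> cantor set"
    assume "\<forall>n. closedin cantor_top (K n) \<and> h ` K n \<subseteq> K n \<and> nowhere_dense_in cantor_top (K n)"
    hence "S64 d h K" by (rule loc)
    thus "\<exists>phiL phiU hh. admissible phiL phiU \<and> fraisse_fence phiL phiU \<and>
              homeomorphic_map (fence_top d phiL phiU) (fence_top d phiL phiU) hh \<and>
              (\<forall>p\<in>fence phiL phiU. \<forall>q\<in>fence phiL phiU. max_dist d (hh p) (hh q) = max_dist d p q) \<and>
              is_factor (fence_top d phiL phiU) hh h \<and>
              (\<forall>x \<in> (\<Union>n. K n). phiL x = phiU x)" by (rule S64.main)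
  qed
  have e: "\<forall>n. closedin cantor_top ((\<lambda>_. {}) n) \<and> h ` ((\<lambda>_. {}) n) \<subseteq> (\<lambda>_. {}) n \<and>
             nowhere_dense_in cantor_top ((\<lambda>_::nat. {}::cantor set) n)"
    by (simp add: nowhere_dense_in_def)
  have part1: "\<exists>phiL phiU hh. admissible phiL phiU \<and> fraisse_fence phiL phiU \<and>
            homeomorphic_map (fence_top d phiL phiU) (fence_top d phiL phiU) hh \<and>
            (\<forall>p\<in>fence phiL phiU. \<forall>q\<in>fence phiL phiU. max_dist d (hh p) (hh q) = max_dist d p q) \<and>
            is_factor (fence_top d phiL phiU) hh h"
    using mp[OF spec[OF part2, of "\<lambda>_. {}"] e] by blast
  show ?thesis using part1 part2 by blast
qed

end
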